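(* Let $\Gamma\subset\mathbb{R}^2$ be a lattice, $\Lambda>0$ smooth and $\Gamma$-periodic, and let $F=\sum_{i=0}^4a_ip_1^{4-i}p_2^i$ with smooth $\Gamma$-periodic $a_i$ satisfy $\{H,F\}=0$, $H=\frac{p_1^2+p_2^2}{2\Lambda}$, with $a_3=a_1$ and $a_4=c_2+a_2-a_0$ for a constant $c_2$ (Kolokoltsov relations with $c_1=0$). Define the constants $$a_{11}=\tfrac12\big\langle(2c_2-2a_0+a_2)\Lambda\big\rangle,\quad a_{22}=\tfrac12\langle(2a_0-a_2)\Lambda\rangle,\quad a_{12}=\tfrac12\langle a_1\Lambda\rangle .$$ Let $\lambda$ be a smooth $\Gamma$-periodic solution of $\Delta\lambda=2c_2\Lambda-2a_{11}-2a_{22}$. Then $$\lambda_{xy}(\lambda_{yyyy}-\lambda_{xxxx})+3(\lambda_{yyy}\lambda_{xyy}-\lambda_{xxy}\lambda_{xxx})+2(\lambda_{yy}\lambda_{xyyy}-\lambda_{xx}\lambda_{xxxy})+4a_{22}\lambda_{xyyy}-4a_{11}\lambda_{xxxy}+2a_{12}(\lambda_{yyyy}-\lambda_{xxxx})=0 .$$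
   Context: $\{H,F\}=\sum_{j=1}^2\left(\frac{\partial H}{\partial q^j}\frac{\partial F}{\partial p_j}-\frac{\partial H}{\partial p_j}\frac{\partial F}{\partial q^j}\right)$, $(q^1,q^2)=(x,y)$; so $F$ is a quartic first integral of the geodesic flow of $\Lambda(dx^2+dy^2)$ on $\mathbb{R}^2/\Gamma$. $\langle g\rangle$ denotes the average of a $\Gamma$-periodic function $g$ over a fundamental domain of $\Gamma$. $\Delta=\partial_x^2+\partial_y^2$. *)

theory Defs
  imports "HOL-Analysis.Analysis"
begin

definition dx :: "(real \<Rightarrow> real \<Rightarrow> real) \<Rightarrow> real \<Rightarrow> real \<Rightarrow> real" where
  "dx f = (\<lambda>x y. deriv (\<lambda>t. f t y) x)"

definition dy :: "(real \<Rightarrow> real \<Rightarrow> real) \<Rightarrow> real \<Rightarrow> real \<Rightarrow> real" where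
  "dy f = (\<lambda>x y. deriv (\<lambda>t. f x t) y)"

text \<open>Iterated partial derivative: True = d/dx, False = d/dy, applied right to left.\<close>
fun iter_pd :: "bool list \<Rightarrow> (real \<Rightarrow> real \<Rightarrow> real) \<Rightarrow> real \<Rightarrow> real \<Rightarrow> real" where
  "iter_pd [] f = f"
| "iter_pd (b # bs) f = (if b then dx else dy) (iter_pd bs f)"

definition smooth2 :: "(real \<Rightarrow> real \<Rightarrow> real) \<Rightarrow> bool" where
  "smooth2 f \<longleftrightarrow> (\<forall>bs. continuous_on UNIV (\<lambda>z::real\<times>real. iter_pd bs f (fst z) (snd z))
                     \<and> (\<lambda>z::real\<times>real. iter_pd bs f (fst z) (snd z)) differentiable_on UNIV)"

text \<open>A lattice Gamma = Z(a,b) + Z(c,d) with linearly independent generators.\<close>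
definition lattice_basis :: "real \<Rightarrow> real \<Rightarrow> real \<Rightarrow> real \<Rightarrow> bool" where
  "lattice_basis a b c d \<longleftrightarrow> a * d - b * c \<noteq> 0"

definition gamma_periodic :: "real \<Rightarrow> real \<Rightarrow> real \<Rightarrow> real \<Rightarrow> (real \<Rightarrow> real \<Rightarrow> real) \<Rightarrow> bool" where
  "gamma_periodic a b c d f \<longleftrightarrow>
     (\<forall>x y. f (x + a) (y + b) = f x y \<and> f (x + c) (y + d) = f x y)"

definition fund_domain :: "real \<Rightarrow> real \<Rightarrow> real \<Rightarrow> real \<Rightarrow> (real \<times> real) set" where
  "fund_domain a b c d = {(s * a + t * c, s * b + t * d) | s t. 0 \<le> s \<and> s \<le> 1 \<and> 0 \<le> t \<and> t \<le> 1}"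

definition avg :: "real \<Rightarrow> real \<Rightarrow> real \<Rightarrow> real \<Rightarrow> (real \<Rightarrow> real \<Rightarrow> real) \<Rightarrow> real" where
  "avg a b c d g = integral (fund_domain a b c d) (\<lambda>z. g (fst z) (snd z))
                   / measure lebesgue (fund_domain a b c d)"

text \<open>Canonical Poisson bracket of functions of (q1,q2,p1,p2) = (x,y,p1,p2).\<close>
definition poisson ::
  "(real \<Rightarrow> real \<Rightarrow> real \<Rightarrow> real \<Rightarrow> real) \<Rightarrow> (real \<Rightarrow> real \<Rightarrow> real \<Rightarrow> real \<Rightarrow> real)
     \<Rightarrow> real \<Rightarrow> real \<Rightarrow> real \<Rightarrow> real \<Rightarrow> real" where
  "poisson H F x y p1 p2 =
     deriv (\<lambda>t. H t y p1 p2) x * deriv (\<lambda>t. F x y t p2) p1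
   - deriv (\<lambda>t. H x y t p2) p1 * deriv (\<lambda>t. F t y p1 p2) x
   + deriv (\<lambda>t. H x t p1 p2) y * deriv (\<lambda>t. F x y p1 t) p2
   - deriv (\<lambda>t. H x y p1 t) p2 * deriv (\<lambda>t. F x t p1 p2) y"

end

theory Submission
  imports Defs
begin


definition cont2 :: "(real \<Rightarrow> real \<Rightarrow> real) \<Rightarrow> bool" where
  "cont2 g \<longleftrightarrow> continuous_on UNIV (\<lambda>z::real\<times>real. g (fst z) (snd z))"

definition C1 :: "(real \<Rightarrow> real \<Rightarrow> real) \<Rightarrow> (real \<Rightarrow> real \<Rightarrow> real) \<Rightarrow> (real \<Rightarrow> real \<Rightarrow> real) \<Rightarrow> bool" where
  "C1 f fx fy \<longleftrightarrow> (\<forall>x y. ((\<lambda>z::real\<times>real. f (fst z) (snd z)) has_derivative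
        (\<lambda>h. fx x y * fst h + fy x y * snd h)) (at (x,y))) \<and> cont2 f \<and> cont2 fx \<and> cont2 fy"

lemma C1_px:
  assumes "C1 f fx fy" shows "((\<lambda>t. f t y) has_real_derivative fx x y) (at x)"
proof -
  have 1: "((\<lambda>t::real. (t,y)) has_derivative (\<lambda>h. (h,0))) (at x)"
    by (auto intro!: derivative_eq_intros)
  have 2: "((\<lambda>z::real\<times>real. f (fst z) (snd z)) has_derivative
        (\<lambda>h. fx x y * fst h + fy x y * snd h)) (at (x,y))" using assms by (simp add: C1_def)
  have "((\<lambda>t. f t y) has_derivative (\<lambda>h. fx x y * h)) (at x)"
    using has_derivative_compose[OF 1 2] by simp
  then show ?thesis unfolding has_field_derivative_def
    by (rule has_derivative_eq_rhs) (simp add: fun_eq_iff mult.commute)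
qed

lemma C1_py:
  assumes "C1 f fx fy" shows "((\<lambda>t. f x t) has_real_derivative fy x y) (at y)"
proof -
  have 1: "((\<lambda>t::real. (x,t)) has_derivative (\<lambda>h. (0,h))) (at y)"
    by (auto intro!: derivative_eq_intros)
  have 2: "((\<lambda>z::real\<times>real. f (fst z) (snd z)) has_derivative
        (\<lambda>h. fx x y * fst h + fy x y * snd h)) (at (x,y))" using assms by (simp add: C1_def)
  have "((\<lambda>t. f x t) has_derivative (\<lambda>h. fy x y * h)) (at y)"
    using has_derivative_compose[OF 1 2] by simp
  then show ?thesis unfolding has_field_derivative_def
    by (rule has_derivative_eq_rhs) (simp add: fun_eq_iff mult.commute)
qed

lemma C1_dx: "C1 f fx fy \<Longrightarrow> dx f = fx"
  by (intro ext) (simp add: dx_def DERIV_imp_deriv C1_px)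
lemma C1_dy: "C1 f fx fy \<Longrightarrow> dy f = fy"
  by (intro ext) (simp add: dy_def DERIV_imp_deriv C1_py)

lemma iter_pd_snoc: "iter_pd (bs @ [b]) f = iter_pd bs ((if b then dx else dy) f)"
  by (induction bs) auto

lemma smooth2_dx: "smooth2 f \<Longrightarrow> smooth2 (dx f)"
  unfolding smooth2_def using iter_pd_snoc[of _ True f] by metis
lemma smooth2_dy: "smooth2 f \<Longrightarrow> smooth2 (dy f)"
  unfolding smooth2_def using iter_pd_snoc[of _ False f] by (metis (full_types))

lemma smooth2_cont: "smooth2 f \<Longrightarrow> cont2 f"
  unfolding smooth2_def cont2_def by (metis iter_pd.simps(1))

lemma smooth2_C1:
  assumes s: "smooth2 f" shows "C1 f (dx f) (dy f)"
proof -
  let ?F = "\<lambda>z::real\<times>real. f (fst z) (snd z)"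
  have "\<forall>x y. (?F has_derivative (\<lambda>h. dx f x y * fst h + dy f x y * snd h)) (at (x,y))"
  proof (intro allI)
    fix x y
    have "?F differentiable (at (x,y))"
      using s unfolding smooth2_def
      by (metis differentiable_on_def iter_pd.simps(1) UNIV_I at_within_open open_UNIV)
    then obtain D where D: "(?F has_derivative D) (at (x,y))" by (auto simp: differentiable_def)
    have lin: "linear D" using D has_derivative_linear by blast
    have 1: "((\<lambda>t::real. (t,y)) has_derivative (\<lambda>h. (h,0))) (at x)"
      by (auto intro!: derivative_eq_intros)
    have 2: "((\<lambda>t::real. (x,t)) has_derivative (\<lambda>h. (0,h))) (at y)"
      by (auto intro!: derivative_eq_intros)
    have hd: "((\<lambda>t. f t y) has_derivative (\<lambda>h. D (h,0))) (at x)"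
      using has_derivative_compose[OF 1 D] by simp
    have "((\<lambda>t. f t y) has_real_derivative D (1,0)) (at x)"
      unfolding has_field_derivative_def
    proof (rule has_derivative_eq_rhs[OF hd])
      show "(\<lambda>h. D (h,0)) = (*) (D (1,0))"
      proof
        fix h :: real show "D (h,0) = D (1,0) * h"
          using linear_cmul[OF lin, of h "(1,0)"] by (simp add: mult.commute)
      qed
    qed
    hence ex: "dx f x y = D (1,0)" by (simp add: dx_def DERIV_imp_deriv)
    have hd: "((\<lambda>t. f x t) has_derivative (\<lambda>h. D (0,h))) (at y)"
      using has_derivative_compose[OF 2 D] by simp
    have "((\<lambda>t. f x t) has_real_derivative D (0,1)) (at y)"
      unfolding has_field_derivative_def
    proof (rule has_derivative_eq_rhs[OF hd])
      show "(\<lambda>h. D (0,h)) = (*) (D (0,1))"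
      proof
        fix h :: real show "D (0,h) = D (0,1) * h"
          using linear_cmul[OF lin, of h "(0,1)"] by (simp add: mult.commute)
      qed
    qed
    hence ey: "dy f x y = D (0,1)" by (simp add: dy_def DERIV_imp_deriv)
    have "D = (\<lambda>h. dx f x y * fst h + dy f x y * snd h)"
    proof
      fix h :: "real\<times>real"
      have "h = (fst h,0) + (0, snd h)" by simp
      hence "D h = D (fst h, 0) + D (0, snd h)" by (metis linear_add[OF lin])
      also have "\<dots> = fst h * D (1,0) + snd h * D (0,1)"
        using linear_cmul[OF lin, of "fst h" "(1,0)"] linear_cmul[OF lin, of "snd h" "(0,1)"] by simp
      finally show "D h = dx f x y * fst h + dy f x y * snd h" by (simp add: ex ey mult.commute)
    qed
    with D show "(?F has_derivative (\<lambda>h. dx f x y * fst h + dy f x y * snd h)) (at (x,y))" by simp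
  qed
  then show ?thesis
    using smooth2_cont[OF s] smooth2_cont[OF smooth2_dx[OF s]] smooth2_cont[OF smooth2_dy[OF s]]
    by (simp add: C1_def)
qed


lemma cont2_near:
  assumes "cont2 g" "e > 0"
  shows "\<exists>d>0. \<forall>p q. \<bar>p - x\<bar> < d \<and> \<bar>q - y\<bar> < d \<longrightarrow> \<bar>g p q - g x y\<bar> < e"
proof -
  from assms(1) have "continuous_on UNIV (\<lambda>z::real\<times>real. g (fst z) (snd z))" by (simp add: cont2_def)
  then obtain d where d: "d > 0" "\<forall>z'. dist z' (x,y) < d \<longrightarrow> dist (g (fst z') (snd z')) (g x y) < e"
    unfolding continuous_on_iff using assms(2) by (metis UNIV_I fst_conv snd_conv)
  show ?thesis
  proof (intro exI[of _ "d/2"] conjI allI impI)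
    show "d/2 > 0" using d by simp
    fix p q assume pq: "\<bar>p - x\<bar> < d/2 \<and> \<bar>q - y\<bar> < d/2"
    have "dist (p,q) (x,y) \<le> \<bar>p - x\<bar> + \<bar>q - y\<bar>"
      unfolding dist_Pair_Pair dist_real_def using sqrt_sum_squares_le_sum_abs[of "\<bar>p-x\<bar>" "\<bar>q-y\<bar>"] by simp
    also have "\<dots> < d" using pq by simp
    finally have "dist (g p q) (g x y) < e" using d by (metis fst_conv snd_conv)
    thus "\<bar>g p q - g x y\<bar> < e" by (simp add: dist_real_def)
  qed
qed

lemma clairaut_C1:
  assumes f: "C1 f fx fy" and fx: "C1 fx fxx fxy" and fy: "C1 fy fyx fyy"
  shows "fxy x y = fyx x y"
proof (rule ccontr)
  assume ne: "fxy x y \<noteq> fyx x y"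
  define e where "e = \<bar>fxy x y - fyx x y\<bar> / 2"
  have e: "e > 0" using ne by (simp add: e_def)
  have c1: "cont2 fxy" using fx by (simp add: C1_def)
  have c2: "cont2 fyx" using fy by (simp add: C1_def)
  obtain d1 where d1: "d1 > 0" "\<forall>p q. \<bar>p - x\<bar> < d1 \<and> \<bar>q - y\<bar> < d1 \<longrightarrow> \<bar>fxy p q - fxy x y\<bar> < e"
    using cont2_near[OF c1 e] by blast
  obtain d2 where d2: "d2 > 0" "\<forall>p q. \<bar>p - x\<bar> < d2 \<and> \<bar>q - y\<bar> < d2 \<longrightarrow> \<bar>fyx p q - fyx x y\<bar> < e"
    using cont2_near[OF c2 e] by blast
  define k where "k = min d1 d2 / 2"
  have k: "k > 0" "k < d1" "k < d2" using d1 d2 by (auto simp: k_def)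
  define D where "D = f (x+k) (y+k) - f (x+k) y - f x (y+k) + f x y"
  have "\<exists>\<xi>. x < \<xi> \<and> \<xi> < x + k \<and> (\<lambda>t. f t (y+k) - f t y) (x+k) - (\<lambda>t. f t (y+k) - f t y) x
          = (x + k - x) * (fx \<xi> (y+k) - fx \<xi> y)"
    by (rule MVT2) (use k in \<open>auto intro!: derivative_eq_intros C1_px[OF f]\<close>)
  then obtain \<xi> where xi: "x < \<xi>" "\<xi> < x + k" "D = k * (fx \<xi> (y+k) - fx \<xi> y)"
    by (auto simp: D_def)
  have "\<exists>\<eta>. y < \<eta> \<and> \<eta> < y + k \<and> fx \<xi> (y+k) - fx \<xi> y = (y + k - y) * fxy \<xi> \<eta>"
    by (rule MVT2) (use k in \<open>auto intro!: C1_py[OF fx]\<close>)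
  then obtain \<eta> where eta: "y < \<eta>" "\<eta> < y + k" "D = k * (k * fxy \<xi> \<eta>)"
    using xi by auto
  have "\<exists>\<eta>'. y < \<eta>' \<and> \<eta>' < y + k \<and> (\<lambda>s. f (x+k) s - f x s) (y+k) - (\<lambda>s. f (x+k) s - f x s) y
          = (y + k - y) * (fy (x+k) \<eta>' - fy x \<eta>')"
    by (rule MVT2) (use k in \<open>auto intro!: derivative_eq_intros C1_py[OF f]\<close>)
  then obtain \<eta>' where eta': "y < \<eta>'" "\<eta>' < y + k" "D = k * (fy (x+k) \<eta>' - fy x \<eta>')"
    by (auto simp: D_def algebra_simps)
  have "\<exists>\<xi>'. x < \<xi>' \<and> \<xi>' < x + k \<and> fy (x+k) \<eta>' - fy x \<eta>' = (x + k - x) * fyx \<xi>' \<eta>'"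
    by (rule MVT2) (use k in \<open>auto intro!: C1_px[OF fy]\<close>)
  then obtain \<xi>' where xi': "x < \<xi>'" "\<xi>' < x + k" "D = k * (k * fyx \<xi>' \<eta>')"
    using eta' by auto
  have eq: "fxy \<xi> \<eta> = fyx \<xi>' \<eta>'" using eta(3) xi'(3) k(1) by simp
  have "\<bar>fxy \<xi> \<eta> - fxy x y\<bar> < e" using d1(2) xi eta k by auto
  moreover have "\<bar>fyx \<xi>' \<eta>' - fyx x y\<bar> < e" using d2(2) xi' eta' k by auto
  ultimately have "\<bar>fxy x y - fyx x y\<bar> < 2 * e" using eq by linarith
  thus False by (simp add: e_def)
qed

lemma smooth2_comm: "smooth2 f \<Longrightarrow> dy (dx f) = dx (dy f)"
  apply (rule ext)+
  apply (rule clairaut_C1[of f "dx f" "dy f" "dx (dx f)" "dy (dx f)" "dx (dy f)" "dy (dy f)"])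
  using smooth2_C1 smooth2_dx smooth2_dy by auto


lemma sum5: "(\<Sum>i\<le>(4::nat). g i) = g 0 + g 1 + g 2 + g 3 + (g 4::real)"
  by (simp add: eval_nat_numeral)
lemma sum6: "(\<Sum>i\<le>(5::nat). g i) = g 0 + g 1 + g 2 + g 3 + g 4 + (g 5::real)"
  by (simp add: eval_nat_numeral)

lemma sm_px: "smooth2 g \<Longrightarrow> ((\<lambda>t. g t y) has_real_derivative dx g x y) (at x)"
  using C1_px smooth2_C1 by blast
lemma sm_py: "smooth2 g \<Longrightarrow> ((\<lambda>t. g x t) has_real_derivative dy g x y) (at y)"
  using C1_py smooth2_C1 by blast

lemma killing:
  fixes \<Lambda> :: "real \<Rightarrow> real \<Rightarrow> real" and A :: "nat \<Rightarrow> real \<Rightarrow> real \<Rightarrow> real" and x y :: real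
  assumes pos: "\<And>x y. \<Lambda> x y > 0" and sL: "smooth2 \<Lambda>"
    and sA: "\<And>i. i \<le> 4 \<Longrightarrow> smooth2 (A i)"
    and integral: "\<And>x y p1 p2. poisson
        (\<lambda>x y p1 p2. (p1\<^sup>2 + p2\<^sup>2) / (2 * \<Lambda> x y))
        (\<lambda>x y p1 p2. \<Sum>i\<le>4. A i x y * p1 ^ (4 - i) * p2 ^ i) x y p1 p2 = 0"
  defines "L \<equiv> \<Lambda> x y" and "Lx \<equiv> dx \<Lambda> x y" and "Ly \<equiv> dy \<Lambda> x y"
  defines "a \<equiv> \<lambda>i. A i x y" and "ax \<equiv> \<lambda>i. dx (A i) x y" and "ay \<equiv> \<lambda>i. dy (A i) x y"
  shows "4*Lx*a 0 + Ly*a 1 + 2*L*ax 0 = 0"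
    and "3*Lx*a 1 + 2*Ly*a 2 + 2*L*(ax 1 + ay 0) = 0"
    and "2*Lx*a 2 + 3*Ly*a 3 + 4*Lx*a 0 + Ly*a 1 + 2*L*(ax 2 + ay 1) = 0"
    and "Lx*a 3 + 4*Ly*a 4 + 3*Lx*a 1 + 2*Ly*a 2 + 2*L*(ax 3 + ay 2) = 0"
proof -
  have L0: "L \<noteq> 0" using pos[of x y] by (simp add: L_def)
  have sA': "smooth2 (A 0)" "smooth2 (A 1)" "smooth2 (A 2)" "smooth2 (A 3)" "smooth2 (A 4)" "smooth2 (A (Suc 0))"
    using sA by auto
  define e where "e = (\<lambda>k::nat. [4*Lx*a 0 + Ly*a 1 + 2*L*ax 0,
     3*Lx*a 1 + 2*Ly*a 2 + 2*L*(ax 1 + ay 0),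
     2*Lx*a 2 + 3*Ly*a 3 + 4*Lx*a 0 + Ly*a 1 + 2*L*(ax 2 + ay 1),
     Lx*a 3 + 4*Ly*a 4 + 3*Lx*a 1 + 2*Ly*a 2 + 2*L*(ax 3 + ay 2),
     2*Lx*a 2 + 3*Ly*a 3 + 2*L*(ax 4 + ay 3),
     Lx*a 3 + 4*Ly*a 4 + 2*L*ay 4] ! k)"
  have key: "(\<Sum>k\<le>5. e k * t^k) = 0" for t
  proof -
    let ?H = "\<lambda>x y p1 p2. (p1\<^sup>2 + p2\<^sup>2) / (2 * \<Lambda> x y)"
    let ?F = "\<lambda>x y p1 p2. \<Sum>i\<le>4. A i x y * p1 ^ (4 - i) * p2 ^ (i::nat)"
    have F: "?F = (\<lambda>x y p1 p2. A 0 x y * p1^4 + A 1 x y * p1^3 * p2 + A 2 x y * p1^2 * p2^2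
               + A 3 x y * p1 * p2^3 + A 4 x y * p2^4)"
      by (simp add: sum5)
    have d1: "deriv (\<lambda>s. ?H s y 1 t) x = - (1 + t^2) * Lx / (2 * L^2)"
      by (rule DERIV_imp_deriv) (use pos[of x y] in \<open>auto intro!: derivative_eq_intros sm_px[OF sL]
           simp: L_def Lx_def power2_eq_square field_simps\<close>)
    have d2: "deriv (\<lambda>s. ?H x s 1 t) y = - (1 + t^2) * Ly / (2 * L^2)"
      by (rule DERIV_imp_deriv) (use pos[of x y] in \<open>auto intro!: derivative_eq_intros sm_py[OF sL]
           simp: L_def Ly_def power2_eq_square field_simps\<close>)
    have d3: "deriv (\<lambda>s. ?H x y s t) 1 = 1 / L"
      by (rule DERIV_imp_deriv) (use pos[of x y] in \<open>auto intro!: derivative_eq_intros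
           simp: L_def power2_eq_square field_simps\<close>)
    have d4: "deriv (\<lambda>s. ?H x y 1 s) t = t / L"
      by (rule DERIV_imp_deriv) (use pos[of x y] in \<open>auto intro!: derivative_eq_intros
           simp: L_def power2_eq_square field_simps\<close>)
    have d5: "deriv (\<lambda>s. ?F s y 1 t) x = ax 0 + ax 1 * t + ax 2 * t^2 + ax 3 * t^3 + ax 4 * t^4"
      unfolding sum5 by (rule DERIV_imp_deriv) (auto intro!: derivative_eq_intros sm_px sA' simp: ax_def)
    have d6: "deriv (\<lambda>s. ?F x s 1 t) y = ay 0 + ay 1 * t + ay 2 * t^2 + ay 3 * t^3 + ay 4 * t^4"
      unfolding sum5 by (rule DERIV_imp_deriv) (auto intro!: derivative_eq_intros sm_py sA' simp: ay_def)
    have d7: "deriv (\<lambda>s. ?F x y s t) 1 = 4 * a 0 + 3 * a 1 * t + 2 * a 2 * t^2 + a 3 * t^3"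
      unfolding sum5 by (rule DERIV_imp_deriv) (auto intro!: derivative_eq_intros simp: a_def eval_nat_numeral)
    have d8: "deriv (\<lambda>s. ?F x y 1 s) t = a 1 + 2 * a 2 * t + 3 * a 3 * t^2 + 4 * a 4 * t^3"
      unfolding sum5 by (rule DERIV_imp_deriv) (auto intro!: derivative_eq_intros simp: a_def eval_nat_numeral)
    have "poisson ?H ?F x y 1 t = 0" by (rule integral)
    hence X0: "(- (1 + t^2) * Lx / (2 * L^2)) * (4 * a 0 + 3 * a 1 * t + 2 * a 2 * t^2 + a 3 * t^3)
          - (1/L) * (ax 0 + ax 1 * t + ax 2 * t^2 + ax 3 * t^3 + ax 4 * t^4)
          + (- (1 + t^2) * Ly / (2 * L^2)) * (a 1 + 2 * a 2 * t + 3 * a 3 * t^2 + 4 * a 4 * t^3)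
          - (t/L) * (ay 0 + ay 1 * t + ay 2 * t^2 + ay 3 * t^3 + ay 4 * t^4) = 0"
      unfolding poisson_def d1 d2 d3 d4 d5 d6 d7 d8 .
    have "(-2*L^2) * ((- (1 + t^2) * Lx / (2 * L^2)) * (4 * a 0 + 3 * a 1 * t + 2 * a 2 * t^2 + a 3 * t^3)
          - (1/L) * (ax 0 + ax 1 * t + ax 2 * t^2 + ax 3 * t^3 + ax 4 * t^4)
          + (- (1 + t^2) * Ly / (2 * L^2)) * (a 1 + 2 * a 2 * t + 3 * a 3 * t^2 + 4 * a 4 * t^3)
          - (t/L) * (ay 0 + ay 1 * t + ay 2 * t^2 + ay 3 * t^3 + ay 4 * t^4)) = (1 + t^2) * Lx * (4 * a 0 + 3 * a 1 * t + 2 * a 2 * t^2 + a 3 * t^3)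
          + 2 * L * (ax 0 + ax 1 * t + ax 2 * t^2 + ax 3 * t^3 + ax 4 * t^4)
          + (1 + t^2) * Ly * (a 1 + 2 * a 2 * t + 3 * a 3 * t^2 + 4 * a 4 * t^3)
          + 2 * L * t * (ay 0 + ay 1 * t + ay 2 * t^2 + ay 3 * t^3 + ay 4 * t^4)"
      using L0 by (simp add: field_simps power2_eq_square)
    with X0 have "(1 + t^2) * Lx * (4 * a 0 + 3 * a 1 * t + 2 * a 2 * t^2 + a 3 * t^3)
          + 2 * L * (ax 0 + ax 1 * t + ax 2 * t^2 + ax 3 * t^3 + ax 4 * t^4)
          + (1 + t^2) * Ly * (a 1 + 2 * a 2 * t + 3 * a 3 * t^2 + 4 * a 4 * t^3)
          + 2 * L * t * (ay 0 + ay 1 * t + ay 2 * t^2 + ay 3 * t^3 + ay 4 * t^4) = 0" by simp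
    thus ?thesis by (simp add: sum6 e_def algebra_simps eval_nat_numeral)
  qed
  have "\<forall>k\<le>5. e k = 0" using polyfun_eq_0[of e 5] key by blast
  from this[rule_format, of 0] this[rule_format, of 1] this[rule_format, of 2] this[rule_format, of 3]
  show "4*Lx*a 0 + Ly*a 1 + 2*L*ax 0 = 0"
    and "3*Lx*a 1 + 2*Ly*a 2 + 2*L*(ax 1 + ay 0) = 0"
    and "2*Lx*a 2 + 3*Ly*a 3 + 4*Lx*a 0 + Ly*a 1 + 2*L*(ax 2 + ay 1) = 0"
    and "Lx*a 3 + 4*Ly*a 4 + 3*Lx*a 1 + 2*Ly*a 2 + 2*L*(ax 3 + ay 2) = 0"
    by (simp_all add: e_def numeral_eq_Suc)
qed


definition cvp :: "(real\<times>real \<Rightarrow> real\<times>real) \<Rightarrow> real \<Rightarrow> bool" where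
  "cvp \<phi> k \<longleftrightarrow> 0 \<le> k \<and> \<phi> \<in> borel_measurable borel \<and>
     (\<forall>h::real\<times>real \<Rightarrow> ennreal. h \<in> borel_measurable borel \<longrightarrow>
        (\<integral>\<^sup>+z. h (\<phi> z) \<partial>lborel) * ennreal k = (\<integral>\<^sup>+z. h z \<partial>lborel))"

lemma cvp_cong: "cvp \<phi> k \<Longrightarrow> (\<And>z. \<phi> z = \<psi> z) \<Longrightarrow> k = k' \<Longrightarrow> cvp \<psi> k'"
proof -
  assume "cvp \<phi> k" "\<And>z. \<phi> z = \<psi> z" "k = k'"
  moreover have "\<phi> = \<psi>" using \<open>\<And>z. \<phi> z = \<psi> z\<close> by auto
  ultimately show ?thesis by simp
qed

lemma cvp_comp:
  assumes 1: "cvp \<phi>1 k1" and 2: "cvp \<phi>2 k2"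
  shows "cvp (\<lambda>z. \<phi>1 (\<phi>2 z)) (k1 * k2)"
  unfolding cvp_def
proof (intro conjI allI impI)
  show "0 \<le> k1 * k2" using 1 2 by (simp add: cvp_def)
  have m1: "\<phi>1 \<in> borel_measurable borel" and m2: "\<phi>2 \<in> borel_measurable borel"
    using 1 2 by (auto simp: cvp_def)
  show "(\<lambda>z. \<phi>1 (\<phi>2 z)) \<in> borel_measurable borel"
    using measurable_compose[OF m2 m1] by (simp add: o_def)
  fix h :: "real\<times>real \<Rightarrow> ennreal" assume h: "h \<in> borel_measurable borel"
  have hm: "(\<lambda>z. h (\<phi>1 z)) \<in> borel_measurable borel"
    using measurable_compose[OF m1 h] by (simp add: o_def)
  have "(\<integral>\<^sup>+z. h (\<phi>1 (\<phi>2 z)) \<partial>lborel) * ennreal (k1 * k2)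
      = ((\<integral>\<^sup>+z. (\<lambda>w. h (\<phi>1 w)) (\<phi>2 z) \<partial>lborel) * ennreal k2) * ennreal k1"
    using 1 2 by (simp add: cvp_def ennreal_mult mult_ac)
  also have "\<dots> = (\<integral>\<^sup>+z. h (\<phi>1 z) \<partial>lborel) * ennreal k1"
  proof -
    have "(\<integral>\<^sup>+z. (\<lambda>w. h (\<phi>1 w)) (\<phi>2 z) \<partial>lborel) * ennreal k2 = (\<integral>\<^sup>+z. (\<lambda>w. h (\<phi>1 w)) z \<partial>lborel)"
      using 2 hm unfolding cvp_def by blast
    thus ?thesis by simp
  qed
  also have "\<dots> = (\<integral>\<^sup>+z. h z \<partial>lborel)"
    using 1 h by (simp add: cvp_def)
  finally show "(\<integral>\<^sup>+z. h (\<phi>1 (\<phi>2 z)) \<partial>lborel) * ennreal (k1 * k2) = (\<integral>\<^sup>+z. h z \<partial>lborel)" .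
qed

lemma cvp_shx: "cvp (\<lambda>z. (fst z + k * snd z, snd z)) 1"
  unfolding cvp_def
proof (intro conjI allI impI)
  show mm: "(\<lambda>z::real\<times>real. (fst z + k * snd z, snd z)) \<in> borel_measurable borel"
    by (intro borel_measurable_continuous_onI continuous_intros)
  fix h :: "real\<times>real \<Rightarrow> ennreal" assume h[measurable]: "h \<in> borel_measurable borel"
  have hm: "(\<lambda>z. h (fst z + k * snd z, snd z)) \<in> borel_measurable borel"
    using measurable_compose[OF mm h] by (simp add: o_def)
  have "(\<integral>\<^sup>+z. h (fst z + k * snd z, snd z) \<partial>lborel)
      = (\<integral>\<^sup>+z. h (fst z + k * snd z, snd z) \<partial>(lborel \<Otimes>\<^sub>M lborel))"
    by (simp add: lborel_prod)
  also have "\<dots> = (\<integral>\<^sup>+y. (\<integral>\<^sup>+x. h (x + k * y, y) \<partial>lborel) \<partial>lborel)"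
    by (subst lborel_pair.nn_integral_snd[symmetric]) (auto simp: lborel_prod hm)
  also have "\<dots> = (\<integral>\<^sup>+y. (\<integral>\<^sup>+x. h (x, y) \<partial>lborel) \<partial>lborel)"
  proof (rule nn_integral_cong)
    fix y :: real
    have "(\<lambda>x. h (x, y)) \<in> borel_measurable borel" by measurable
    from nn_integral_real_affine[OF this, of 1 "k*y"]
    show "(\<integral>\<^sup>+x. h (x + k * y, y) \<partial>lborel) = (\<integral>\<^sup>+x. h (x, y) \<partial>lborel)"
      by (simp add: add.commute)
  qed
  also have "\<dots> = (\<integral>\<^sup>+z. h z \<partial>(lborel \<Otimes>\<^sub>M lborel))"
    by (subst lborel_pair.nn_integral_snd[symmetric]) (auto simp: lborel_prod)
  also have "\<dots> = (\<integral>\<^sup>+z. h z \<partial>lborel)" by (simp add: lborel_prod)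
  finally show "(\<integral>\<^sup>+z. h (fst z + k * snd z, snd z) \<partial>lborel) * ennreal 1 = (\<integral>\<^sup>+z. h z \<partial>lborel)"
    by simp
qed (simp)

lemma cvp_shy: "cvp (\<lambda>z. (fst z, snd z + k * fst z)) 1"
  unfolding cvp_def
proof (intro conjI allI impI)
  show mm: "(\<lambda>z::real\<times>real. (fst z, snd z + k * fst z)) \<in> borel_measurable borel"
    by (intro borel_measurable_continuous_onI continuous_intros)
  fix h :: "real\<times>real \<Rightarrow> ennreal" assume h[measurable]: "h \<in> borel_measurable borel"
  have hm: "(\<lambda>z. h (fst z, snd z + k * fst z)) \<in> borel_measurable borel"
    using measurable_compose[OF mm h] by (simp add: o_def)
  have "(\<integral>\<^sup>+z. h (fst z, snd z + k * fst z) \<partial>lborel)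
      = (\<integral>\<^sup>+z. h (fst z, snd z + k * fst z) \<partial>(lborel \<Otimes>\<^sub>M lborel))"
    by (simp add: lborel_prod)
  also have "\<dots> = (\<integral>\<^sup>+x. (\<integral>\<^sup>+y. h (x, y + k * x) \<partial>lborel) \<partial>lborel)"
    by (subst lborel.nn_integral_fst[symmetric]) (auto simp: lborel_prod hm)
  also have "\<dots> = (\<integral>\<^sup>+x. (\<integral>\<^sup>+y. h (x, y) \<partial>lborel) \<partial>lborel)"
  proof (rule nn_integral_cong)
    fix x :: real
    have "(\<lambda>y. h (x, y)) \<in> borel_measurable borel" by measurable
    from nn_integral_real_affine[OF this, of 1 "k*x"]
    show "(\<integral>\<^sup>+y. h (x, y + k * x) \<partial>lborel) = (\<integral>\<^sup>+y. h (x, y) \<partial>lborel)"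
      by (simp add: add.commute)
  qed
  also have "\<dots> = (\<integral>\<^sup>+z. h z \<partial>(lborel \<Otimes>\<^sub>M lborel))"
    by (subst lborel.nn_integral_fst[symmetric]) (auto simp: lborel_prod)
  also have "\<dots> = (\<integral>\<^sup>+z. h z \<partial>lborel)" by (simp add: lborel_prod)
  finally show "(\<integral>\<^sup>+z. h (fst z, snd z + k * fst z) \<partial>lborel) * ennreal 1 = (\<integral>\<^sup>+z. h z \<partial>lborel)"
    by simp
qed (simp)

lemma cvp_scx: assumes "\<alpha> \<noteq> 0" shows "cvp (\<lambda>z. (\<alpha> * fst z, snd z)) \<bar>\<alpha>\<bar>"
  unfolding cvp_def
proof (intro conjI allI impI)
  show mm: "(\<lambda>z::real\<times>real. (\<alpha> * fst z, snd z)) \<in> borel_measurable borel"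
    by (intro borel_measurable_continuous_onI continuous_intros)
  fix h :: "real\<times>real \<Rightarrow> ennreal" assume h[measurable]: "h \<in> borel_measurable borel"
  have hm: "(\<lambda>z. h (\<alpha> * fst z, snd z)) \<in> borel_measurable borel"
    using measurable_compose[OF mm h] by (simp add: o_def)
  have "(\<integral>\<^sup>+z. h (\<alpha> * fst z, snd z) \<partial>lborel) * ennreal \<bar>\<alpha>\<bar>
      = (\<integral>\<^sup>+z. h (\<alpha> * fst z, snd z) \<partial>(lborel \<Otimes>\<^sub>M lborel)) * ennreal \<bar>\<alpha>\<bar>"
    by (simp add: lborel_prod)
  also have "\<dots> = (\<integral>\<^sup>+y. (\<integral>\<^sup>+x. h (\<alpha> * x, y) \<partial>lborel) \<partial>lborel) * ennreal \<bar>\<alpha>\<bar>"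
    by (subst lborel_pair.nn_integral_snd[symmetric]) (auto simp: lborel_prod hm)
  also have "\<dots> = (\<integral>\<^sup>+y. (\<integral>\<^sup>+x. h (\<alpha> * x, y) \<partial>lborel) * ennreal \<bar>\<alpha>\<bar> \<partial>lborel)"
    by (rule nn_integral_multc[symmetric]) measurable
  also have "\<dots> = (\<integral>\<^sup>+y. (\<integral>\<^sup>+x. h (x, y) \<partial>lborel) \<partial>lborel)"
  proof (rule nn_integral_cong)
    fix y :: real
    have "(\<lambda>x. h (x, y)) \<in> borel_measurable borel" by measurable
    from nn_integral_real_affine[OF this assms, of 0]
    show "(\<integral>\<^sup>+x. h (\<alpha> * x, y) \<partial>lborel) * ennreal \<bar>\<alpha>\<bar> = (\<integral>\<^sup>+x. h (x, y) \<partial>lborel)"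
      by (simp add: mult.commute)
  qed
  also have "\<dots> = (\<integral>\<^sup>+z. h z \<partial>(lborel \<Otimes>\<^sub>M lborel))"
    by (subst lborel_pair.nn_integral_snd[symmetric]) (auto simp: lborel_prod)
  also have "\<dots> = (\<integral>\<^sup>+z. h z \<partial>lborel)" by (simp add: lborel_prod)
  finally show "(\<integral>\<^sup>+z. h (\<alpha> * fst z, snd z) \<partial>lborel) * ennreal \<bar>\<alpha>\<bar> = (\<integral>\<^sup>+z. h z \<partial>lborel)" .
qed (simp)

lemma cvp_scy: assumes "\<alpha> \<noteq> 0" shows "cvp (\<lambda>z. (fst z, \<alpha> * snd z)) \<bar>\<alpha>\<bar>"
  unfolding cvp_def
proof (intro conjI allI impI)
  show mm: "(\<lambda>z::real\<times>real. (fst z, \<alpha> * snd z)) \<in> borel_measurable borel"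
    by (intro borel_measurable_continuous_onI continuous_intros)
  fix h :: "real\<times>real \<Rightarrow> ennreal" assume h[measurable]: "h \<in> borel_measurable borel"
  have hm: "(\<lambda>z. h (fst z, \<alpha> * snd z)) \<in> borel_measurable borel"
    using measurable_compose[OF mm h] by (simp add: o_def)
  have "(\<integral>\<^sup>+z. h (fst z, \<alpha> * snd z) \<partial>lborel) * ennreal \<bar>\<alpha>\<bar>
      = (\<integral>\<^sup>+z. h (fst z, \<alpha> * snd z) \<partial>(lborel \<Otimes>\<^sub>M lborel)) * ennreal \<bar>\<alpha>\<bar>"
    by (simp add: lborel_prod)
  also have "\<dots> = (\<integral>\<^sup>+x. (\<integral>\<^sup>+y. h (x, \<alpha> * y) \<partial>lborel) \<partial>lborel) * ennreal \<bar>\<alpha>\<bar>"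
    by (subst lborel.nn_integral_fst[symmetric]) (auto simp: lborel_prod hm)
  also have "\<dots> = (\<integral>\<^sup>+x. (\<integral>\<^sup>+y. h (x, \<alpha> * y) \<partial>lborel) * ennreal \<bar>\<alpha>\<bar> \<partial>lborel)"
    by (rule nn_integral_multc[symmetric]) measurable
  also have "\<dots> = (\<integral>\<^sup>+x. (\<integral>\<^sup>+y. h (x, y) \<partial>lborel) \<partial>lborel)"
  proof (rule nn_integral_cong)
    fix x :: real
    have "(\<lambda>y. h (x, y)) \<in> borel_measurable borel" by measurable
    from nn_integral_real_affine[OF this assms, of 0]
    show "(\<integral>\<^sup>+y. h (x, \<alpha> * y) \<partial>lborel) * ennreal \<bar>\<alpha>\<bar> = (\<integral>\<^sup>+y. h (x, y) \<partial>lborel)"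
      by (simp add: mult.commute)
  qed
  also have "\<dots> = (\<integral>\<^sup>+z. h z \<partial>(lborel \<Otimes>\<^sub>M lborel))"
    by (subst lborel.nn_integral_fst[symmetric]) (auto simp: lborel_prod)
  also have "\<dots> = (\<integral>\<^sup>+z. h z \<partial>lborel)" by (simp add: lborel_prod)
  finally show "(\<integral>\<^sup>+z. h (fst z, \<alpha> * snd z) \<partial>lborel) * ennreal \<bar>\<alpha>\<bar> = (\<integral>\<^sup>+z. h z \<partial>lborel)" .
qed (simp)

definition lmap :: "real \<Rightarrow> real \<Rightarrow> real \<Rightarrow> real \<Rightarrow> real\<times>real \<Rightarrow> real\<times>real" where
  "lmap a b c d z = (fst z * a + snd z * c, fst z * b + snd z * d)"

lemma cvp_lin_a:
  assumes "a \<noteq> 0" "a * d - b * c \<noteq> 0"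
  shows "cvp (lmap a b c d) \<bar>a * d - b * c\<bar>"
proof -
  let ?\<delta> = "a * d - b * c"
  have "cvp (\<lambda>z. (\<lambda>z. (fst z, snd z + (b/a) * fst z)) ((\<lambda>z. (fst z, (?\<delta>/a) * snd z))
             ((\<lambda>z. (a * fst z, snd z)) ((\<lambda>z. (fst z + (c/a) * snd z, snd z)) z))))
            (1 * (\<bar>?\<delta>/a\<bar> * (\<bar>a\<bar> * 1)))"
    using assms by (intro cvp_comp cvp_shx cvp_shy cvp_scx cvp_scy) auto
  then show ?thesis
  proof (rule cvp_cong)
    fix z :: "real\<times>real"
    show "(\<lambda>z. (fst z, snd z + (b/a) * fst z)) ((\<lambda>z. (fst z, (?\<delta>/a) * snd z))
             ((\<lambda>z. (a * fst z, snd z)) ((\<lambda>z. (fst z + (c/a) * snd z, snd z)) z))) = lmap a b c d z"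
      using assms by (simp add: lmap_def field_simps)
    show "1 * (\<bar>?\<delta>/a\<bar> * (\<bar>a\<bar> * 1)) = \<bar>?\<delta>\<bar>"
      using assms by (simp add: abs_divide)
  qed
qed

lemma cvp_lin:
  assumes "a * d - b * c \<noteq> 0"
  shows "cvp (lmap a b c d) \<bar>a * d - b * c\<bar>"
proof (cases "a = 0")
  case False then show ?thesis using cvp_lin_a assms by blast
next
  case True
  hence c: "c \<noteq> 0" using assms by auto
  have "cvp (lmap (a + c) (b + d) c d) \<bar>(a + c) * d - (b + d) * c\<bar>"
    using True c assms by (intro cvp_lin_a) (auto simp: algebra_simps)
  hence "cvp (\<lambda>z. lmap (a + c) (b + d) c d ((\<lambda>z. (fst z, snd z + (-1) * fst z)) z))
         (\<bar>(a + c) * d - (b + d) * c\<bar> * 1)"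
    by (intro cvp_comp cvp_shy)
  then show ?thesis
    by (rule cvp_cong) (auto simp: lmap_def algebra_simps)
qed


abbreviation "Q01 \<equiv> cbox (0::real,0::real) (1,1)"

lemma lmap_cont: "continuous_on S (lmap a b c d)"
  unfolding lmap_def by (intro continuous_intros)

lemma lmap_inj: "a * d - b * c \<noteq> 0 \<Longrightarrow> lmap a b c d z = lmap a b c d w \<Longrightarrow> z = w"
proof -
  assume det: "a * d - b * c \<noteq> 0" and eq: "lmap a b c d z = lmap a b c d w"
  obtain s t where z: "z = (s,t)" by (cases z)
  obtain s' t' where w: "w = (s',t')" by (cases w)
  have e1: "(s - s') * a + (t - t') * c = 0" and e2: "(s - s') * b + (t - t') * d = 0"
    using eq by (auto simp: lmap_def z w algebra_simps)
  have "(s - s') * (a * d - b * c) = 0"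
  proof -
    have "(s - s') * (a * d - b * c) = d * ((s - s') * a + (t - t') * c) - c * ((s - s') * b + (t - t') * d)"
      by (simp add: algebra_simps)
    thus ?thesis using e1 e2 by simp
  qed
  moreover have "(t - t') * (a * d - b * c) = 0"
  proof -
    have "(t - t') * (a * d - b * c) = a * ((s - s') * b + (t - t') * d) - b * ((s - s') * a + (t - t') * c)"
      by (simp add: algebra_simps)
    thus ?thesis using e1 e2 by simp
  qed
  ultimately show "z = w" using det by (simp add: z w)
qed

lemma cv_nonneg:
  fixes G :: "real\<times>real \<Rightarrow> real"
  assumes det: "a * d - b * c \<noteq> 0" and cont: "continuous_on UNIV G"
    and nn: "\<And>z. z \<in> lmap a b c d ` Q01 \<Longrightarrow> 0 \<le> G z"
  shows "integral (lmap a b c d ` Q01) G = \<bar>a * d - b * c\<bar> * integral Q01 (\<lambda>z. G (lmap a b c d z))"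
proof -
  let ?D = "lmap a b c d ` Q01"
  let ?L = "lmap a b c d"
  have cD: "compact ?D" by (intro compact_continuous_image lmap_cont compact_cbox)
  have "integrable lborel (\<lambda>x. indicator ?D x *\<^sub>R G x)"
    by (rule borel_integrable_compact[OF cD]) (use cont continuous_on_subset in blast)
  hence "(\<lambda>x. indicator ?D x *\<^sub>R G x) integrable_on UNIV" by (rule integrable_on_lborel)
  moreover have "(\<lambda>x. indicator ?D x *\<^sub>R G x) = (\<lambda>x. if x \<in> ?D then G x else 0)"
    by (auto simp: indicator_def)
  ultimately have intD: "G integrable_on ?D" using integrable_restrict_UNIV[of ?D G] by simp
  have E1: "(\<integral>\<^sup>+x. ennreal (G x) * indicator ?D x \<partial>lborel) = ennreal (integral ?D G)"
    by (rule nn_integral_has_integral_lebesgue') (use nn intD in auto)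
  have contQ: "continuous_on Q01 (\<lambda>z. G (?L z))"
    by (rule continuous_on_compose2[OF cont lmap_cont]) auto
  have E2: "(\<integral>\<^sup>+z. ennreal (G (?L z)) * indicator Q01 z \<partial>lborel) = ennreal (integral Q01 (\<lambda>z. G (?L z)))"
    by (rule nn_integral_has_integral_lebesgue') (use nn integrable_continuous[OF contQ] in auto)
  have cv: "cvp ?L \<bar>a * d - b * c\<bar>" by (rule cvp_lin[OF det])
  have hm: "(\<lambda>x. ennreal (G x) * indicator ?D x) \<in> borel_measurable borel"
  proof -
    have "G \<in> borel_measurable borel" using cont by (rule borel_measurable_continuous_onI)
    moreover have "?D \<in> sets borel" using cD by (simp add: compact_imp_closed borel_closed)
    ultimately show ?thesis by measurable
  qed
  have "(\<integral>\<^sup>+z. (\<lambda>x. ennreal (G x) * indicator ?D x) (?L z) \<partial>lborel) * ennreal \<bar>a * d - b * c\<bar>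
        = (\<integral>\<^sup>+x. ennreal (G x) * indicator ?D x \<partial>lborel)"
    using cv hm unfolding cvp_def by blast
  moreover have "(\<lambda>z. (\<lambda>x. ennreal (G x) * indicator ?D x) (?L z)) = (\<lambda>z. ennreal (G (?L z)) * indicator Q01 z)"
  proof
    fix z
    have "?L z \<in> ?D \<longleftrightarrow> z \<in> Q01"
    proof
      assume "?L z \<in> ?D"
      then obtain w where "w \<in> Q01" "?L z = ?L w" by auto
      thus "z \<in> Q01" using lmap_inj[OF det] by metis
    qed auto
    thus "(\<lambda>x. ennreal (G x) * indicator ?D x) (?L z) = ennreal (G (?L z)) * indicator Q01 z"
      by (simp add: indicator_def)
  qed
  ultimately have "ennreal (integral Q01 (\<lambda>z. G (?L z))) * ennreal \<bar>a * d - b * c\<bar> = ennreal (integral ?D G)"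
    using E1 E2 by simp
  moreover have "0 \<le> integral Q01 (\<lambda>z. G (?L z))"
    by (rule integral_nonneg[OF integrable_continuous[OF contQ]]) (use nn in auto)
  moreover have "0 \<le> integral ?D G"
    by (rule integral_nonneg[OF intD]) (use nn in auto)
  ultimately show ?thesis
  proof -
    assume a1: "ennreal (integral Q01 (\<lambda>z. G (?L z))) * ennreal \<bar>a * d - b * c\<bar> = ennreal (integral ?D G)"
      and a2: "0 \<le> integral Q01 (\<lambda>z. G (?L z))" and a3: "0 \<le> integral ?D G"
    have "ennreal (integral Q01 (\<lambda>z. G (?L z)) * \<bar>a * d - b * c\<bar>) = ennreal (integral ?D G)"
      using a1 a2 by (simp add: ennreal_mult)
    hence "integral Q01 (\<lambda>z. G (?L z)) * \<bar>a * d - b * c\<bar> = integral ?D G"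
      using a2 a3 by (subst (asm) ennreal_inj) auto
    thus ?thesis by (simp add: mult.commute)
  qed
qed

lemma Q01_int1: "integral Q01 (\<lambda>z. 1::real) = 1"
  by (simp add: content_Pair)

lemma cv_cont:
  fixes G :: "real\<times>real \<Rightarrow> real"
  assumes det: "a * d - b * c \<noteq> 0" and cont: "continuous_on UNIV G"
  shows "integral (lmap a b c d ` Q01) G = \<bar>a * d - b * c\<bar> * integral Q01 (\<lambda>z. G (lmap a b c d z))"
proof -
  let ?D = "lmap a b c d ` Q01"
  let ?L = "lmap a b c d"
  have cD: "compact ?D" by (intro compact_continuous_image lmap_cont compact_cbox)
  have "(0,0) \<in> Q01" by (simp add: cbox_Pair_eq)
  hence neD: "?D \<noteq> {}" by blast
  obtain m where m: "m \<in> ?D" "\<forall>z\<in>?D. G m \<le> G z"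
    using continuous_attains_inf[OF cD neD continuous_on_subset[OF cont]] by blast
  have intD: "f integrable_on ?D" if "continuous_on UNIV f" for f :: "real\<times>real \<Rightarrow> real"
  proof -
    have "integrable lborel (\<lambda>x. indicator ?D x *\<^sub>R f x)"
      by (rule borel_integrable_compact[OF cD]) (use that continuous_on_subset in blast)
    hence "(\<lambda>x. indicator ?D x *\<^sub>R f x) integrable_on UNIV" by (rule integrable_on_lborel)
    moreover have "(\<lambda>x. indicator ?D x *\<^sub>R f x) = (\<lambda>x. if x \<in> ?D then f x else 0)"
      by (auto simp: indicator_def)
    ultimately show ?thesis using integrable_restrict_UNIV[of ?D f] by simp
  qed
  have intQ: "(\<lambda>z. f (?L z)) integrable_on Q01" if "continuous_on UNIV f" for f :: "real\<times>real \<Rightarrow> real"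
    by (rule integrable_continuous, rule continuous_on_compose2[OF that lmap_cont]) auto
  have c1: "continuous_on UNIV (\<lambda>z. G z - G m)" using cont by (intro continuous_intros)
  have c2: "continuous_on UNIV (\<lambda>z::real\<times>real. 1::real)" by (intro continuous_intros)
  have A: "integral ?D (\<lambda>z. G z - G m) = \<bar>a * d - b * c\<bar> * integral Q01 (\<lambda>z. G (?L z) - G m)"
    by (rule cv_nonneg[OF det c1]) (use m in auto)
  have B: "integral ?D (\<lambda>z. 1) = \<bar>a * d - b * c\<bar> * integral Q01 (\<lambda>z. 1::real)"
    using cv_nonneg[OF det c2] by simp
  have c3: "continuous_on UNIV (\<lambda>z::real\<times>real. G m * 1)" by (intro continuous_intros)
  have i1: "integral ?D (\<lambda>z. G z - G m * 1) = integral ?D G - integral ?D (\<lambda>z. G m * 1)"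
    by (rule integral_diff[OF intD[OF cont] intD[OF c3]])
  have i2: "integral ?D (\<lambda>z. G m * 1) = G m * integral ?D (\<lambda>z. 1)"
    by (rule integral_mult_right)
  have i3: "integral Q01 (\<lambda>z. G (?L z) - G m * 1) = integral Q01 (\<lambda>z. G (?L z)) - integral Q01 (\<lambda>z. G m * 1)"
    by (rule integral_diff[OF intQ[OF cont]]) (simp add: integrable_continuous continuous_intros)
  have i4: "integral Q01 (\<lambda>z. G m * 1) = G m * integral Q01 (\<lambda>z. 1::real)"
    by (rule integral_mult_right)
  have e3: "integral ?D G = G m * \<bar>a * d - b * c\<bar> + \<bar>a * d - b * c\<bar> * integral Q01 (\<lambda>z. G (?L z) - G m)"
    using A B i1 i2 Q01_int1 by simp
  have e5: "integral Q01 (\<lambda>z. G (?L z)) = G m + integral Q01 (\<lambda>z. G (?L z) - G m)"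
    using i3 i4 Q01_int1 by simp
  show ?thesis unfolding e3 e5 by (simp add: algebra_simps)
qed

lemma fund_domain_lmap: "fund_domain a b c d = lmap a b c d ` Q01"
  by (fastforce simp: fund_domain_def lmap_def cbox_Pair_eq image_def)

definition Iq :: "real \<Rightarrow> real \<Rightarrow> real \<Rightarrow> real \<Rightarrow> (real \<Rightarrow> real \<Rightarrow> real) \<Rightarrow> real" where
  "Iq a b c d g = integral Q01 (\<lambda>z. g (fst z * a + snd z * c) (fst z * b + snd z * d))"

lemma avg_Iq:
  assumes det: "a * d - b * c \<noteq> 0" and cont: "cont2 g"
  shows "avg a b c d g = Iq a b c d g"
proof -
  have cG: "continuous_on UNIV (\<lambda>z::real\<times>real. g (fst z) (snd z))" using cont by (simp add: cont2_def)
  have c1: "continuous_on UNIV (\<lambda>z::real\<times>real. 1::real)" by (intro continuous_intros)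
  have cD: "compact (lmap a b c d ` Q01)" by (intro compact_continuous_image lmap_cont compact_cbox)
  have "measure lebesgue (fund_domain a b c d) = integral (lmap a b c d ` Q01) (\<lambda>z. 1::real)"
    unfolding fund_domain_lmap by (rule lmeasure_integral[OF lmeasurable_compact[OF cD]])
  also have "\<dots> = \<bar>a * d - b * c\<bar>" using cv_cont[OF det c1] Q01_int1 by simp
  finally have m: "measure lebesgue (fund_domain a b c d) = \<bar>a * d - b * c\<bar>" .
  have "integral (fund_domain a b c d) (\<lambda>z. g (fst z) (snd z)) = \<bar>a * d - b * c\<bar> * Iq a b c d g"
    unfolding fund_domain_lmap Iq_def using cv_cont[OF det cG] by (simp add: lmap_def)
  thus ?thesis using det by (simp add: avg_def m)
qed


lemma C1_chain_s:
  assumes "C1 g gx gy"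
  shows "((\<lambda>s. g (s * a + t * c) (s * b + t * d)) has_vector_derivative
           (a * gx (s * a + t * c) (s * b + t * d) + b * gy (s * a + t * c) (s * b + t * d))) (at s within X)"
proof -
  let ?p = "(s * a + t * c, s * b + t * d)"
  have 1: "((\<lambda>s. (s * a + t * c, s * b + t * d)) has_derivative (\<lambda>h. (h * a, h * b))) (at s within X)"
    by (auto intro!: derivative_eq_intros)
  have 2: "((\<lambda>z::real\<times>real. g (fst z) (snd z)) has_derivative
        (\<lambda>h. gx (fst ?p) (snd ?p) * fst h + gy (fst ?p) (snd ?p) * snd h)) (at ?p within ((\<lambda>s. (s * a + t * c, s * b + t * d)) ` X))"
    using assms by (auto simp: C1_def intro: has_derivative_subset)
  have "((\<lambda>s. g (s * a + t * c) (s * b + t * d)) has_derivative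
        (\<lambda>h. gx (fst ?p) (snd ?p) * (h * a) + gy (fst ?p) (snd ?p) * (h * b))) (at s within X)"
    using has_derivative_in_compose[OF 1 2] by (simp add: o_def)
  thus ?thesis unfolding has_vector_derivative_def
    by (rule has_derivative_eq_rhs) (auto simp: fun_eq_iff algebra_simps)
qed

lemma C1_chain_t:
  assumes "C1 g gx gy"
  shows "((\<lambda>t. g (s * a + t * c) (s * b + t * d)) has_vector_derivative
           (c * gx (s * a + t * c) (s * b + t * d) + d * gy (s * a + t * c) (s * b + t * d))) (at t within X)"
proof -
  let ?p = "(s * a + t * c, s * b + t * d)"
  have 1: "((\<lambda>t. (s * a + t * c, s * b + t * d)) has_derivative (\<lambda>h. (h * c, h * d))) (at t within X)"
    by (auto intro!: derivative_eq_intros)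
  have 2: "((\<lambda>z::real\<times>real. g (fst z) (snd z)) has_derivative
        (\<lambda>h. gx (fst ?p) (snd ?p) * fst h + gy (fst ?p) (snd ?p) * snd h)) (at ?p within ((\<lambda>t. (s * a + t * c, s * b + t * d)) ` X))"
    using assms by (auto simp: C1_def intro: has_derivative_subset)
  have "((\<lambda>t. g (s * a + t * c) (s * b + t * d)) has_derivative
        (\<lambda>h. gx (fst ?p) (snd ?p) * (h * c) + gy (fst ?p) (snd ?p) * (h * d))) (at t within X)"
    using has_derivative_in_compose[OF 1 2] by (simp add: o_def)
  thus ?thesis unfolding has_vector_derivative_def
    by (rule has_derivative_eq_rhs) (auto simp: fun_eq_iff algebra_simps)
qed

lemma cont2_comp_lin:
  assumes "cont2 g"
  shows "continuous_on S (\<lambda>z::real\<times>real. g (fst z * a + snd z * c) (fst z * b + snd z * d))"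
proof -
  have "continuous_on UNIV (\<lambda>z::real\<times>real. g (fst z) (snd z))" using assms by (simp add: cont2_def)
  from continuous_on_compose2[OF this lmap_cont[of UNIV a b c d]]
  have "continuous_on UNIV (\<lambda>z. g (fst (lmap a b c d z)) (snd (lmap a b c d z)))" by simp
  thus ?thesis by (auto simp: lmap_def intro: continuous_on_subset)
qed

lemma Iq_dir:
  assumes per: "gamma_periodic a b c d g" and g: "C1 g gx gy"
  shows "Iq a b c d (\<lambda>x y. a * gx x y + b * gy x y) = 0"
    and "Iq a b c d (\<lambda>x y. c * gx x y + d * gy x y) = 0"
proof -
  have cx: "cont2 gx" and cy: "cont2 gy" using g by (auto simp: C1_def)
  have c1: "cont2 (\<lambda>x y. a * gx x y + b * gy x y)" and c2: "cont2 (\<lambda>x y. c * gx x y + d * gy x y)"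
    using cx cy unfolding cont2_def by (auto intro!: continuous_intros)
  let ?F1 = "\<lambda>s t. a * gx (s * a + t * c) (s * b + t * d) + b * gy (s * a + t * c) (s * b + t * d)"
  let ?F2 = "\<lambda>s t. c * gx (s * a + t * c) (s * b + t * d) + d * gy (s * a + t * c) (s * b + t * d)"
  have inner1: "integral {0..1} (\<lambda>s. ?F1 s t) = 0" for t
  proof -
    have "((\<lambda>s. ?F1 s t) has_integral (g (1 * a + t * c) (1 * b + t * d) - g (0 * a + t * c) (0 * b + t * d))) {0..1}"
      by (rule fundamental_theorem_of_calculus) (auto intro!: C1_chain_s[OF g])
    moreover have "g (1 * a + t * c) (1 * b + t * d) = g (0 * a + t * c) (0 * b + t * d)"
      using per unfolding gamma_periodic_def by (metis add.commute mult_1 mult_zero_left add_0)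
    ultimately show ?thesis by (simp add: integral_unique)
  qed
  have inner2: "integral {0..1} (\<lambda>t. ?F2 s t) = 0" for s
  proof -
    have "((\<lambda>t. ?F2 s t) has_integral (g (s * a + 1 * c) (s * b + 1 * d) - g (s * a + 0 * c) (s * b + 0 * d))) {0..1}"
      by (rule fundamental_theorem_of_calculus) (auto intro!: C1_chain_t[OF g])
    moreover have "g (s * a + 1 * c) (s * b + 1 * d) = g (s * a + 0 * c) (s * b + 0 * d)"
      using per unfolding gamma_periodic_def by simp
    ultimately show ?thesis by (simp add: integral_unique)
  qed
  have cc1: "continuous_on (cbox (0,0) (1,1)) (\<lambda>(s,t). ?F1 s t)"
    using cont2_comp_lin[OF c1] by (simp add: case_prod_unfold)
  have cc2: "continuous_on (cbox (0,0) (1,1)) (\<lambda>(s,t). ?F2 s t)"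
    using cont2_comp_lin[OF c2] by (simp add: case_prod_unfold)
  have "Iq a b c d (\<lambda>x y. a * gx x y + b * gy x y) = integral (cbox (0::real,0::real) (1,1)) (\<lambda>(s,t). ?F1 s t)"
    by (simp add: Iq_def case_prod_unfold)
  also have "\<dots> = integral (cbox 0 1) (\<lambda>s. integral (cbox 0 1) (\<lambda>t. ?F1 s t))"
    using integral_prod_continuous[OF cc1] by simp
  also have "\<dots> = integral (cbox 0 1) (\<lambda>t. integral (cbox 0 1) (\<lambda>s. ?F1 s t))"
    by (rule integral_swap_continuous) (use cc1 in simp)
  also have "\<dots> = 0" using inner1 by simp
  finally show "Iq a b c d (\<lambda>x y. a * gx x y + b * gy x y) = 0" .
  have "Iq a b c d (\<lambda>x y. c * gx x y + d * gy x y) = integral (cbox (0::real,0::real) (1,1)) (\<lambda>(s,t). ?F2 s t)"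
    by (simp add: Iq_def case_prod_unfold)
  also have "\<dots> = integral (cbox 0 1) (\<lambda>s. integral (cbox 0 1) (\<lambda>t. ?F2 s t))"
    using integral_prod_continuous[OF cc2] by simp
  also have "\<dots> = 0" using inner2 by simp
  finally show "Iq a b c d (\<lambda>x y. c * gx x y + d * gy x y) = 0" .
qed

lemma per_nat1: fixes h :: "real \<Rightarrow> real \<Rightarrow> real" shows "(\<forall>x y. h (x + a) (y + b) = h x y) \<Longrightarrow> h (x + real n * a) (y + real n * b) = h x y"
proof (induction n arbitrary: x y)
  case 0 then show ?case by simp
next
  case (Suc n)
  have "h (x + real (Suc n) * a) (y + real (Suc n) * b) = h ((x + real n * a) + a) ((y + real n * b) + b)"
    by (simp add: algebra_simps)
  also have "\<dots> = h (x + real n * a) (y + real n * b)" using Suc.prems by blast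
  finally show ?case using Suc by simp
qed

lemma per_int1:
  fixes h :: "real \<Rightarrow> real \<Rightarrow> real"
  assumes "\<forall>x y. h (x + a) (y + b) = h x y"
  shows "h (x + of_int m * a) (y + of_int m * b) = h x y"
proof (cases "m \<ge> 0")
  case True
  then obtain n where "m = int n" using nonneg_int_cases by blast
  then show ?thesis using per_nat1[OF assms] by simp
next
  case False
  then obtain n where m: "m = - int n" by (metis neg_int_cases less_le not_le)
  have "h ((x - real n * a) + real n * a) ((y - real n * b) + real n * b) = h (x - real n * a) (y - real n * b)"
    by (rule per_nat1[OF assms])
  then show ?thesis using m by simp
qed

lemma per_shift:
  assumes "gamma_periodic a b c d h"
  shows "h (x + of_int m * a + of_int n * c) (y + of_int m * b + of_int n * d) = h x y"
proof -
  have A: "\<forall>x y. h (x + a) (y + b) = h x y" and C: "\<forall>x y. h (x + c) (y + d) = h x y"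
    using assms by (auto simp: gamma_periodic_def)
  have "h ((x + of_int m * a) + of_int n * c) ((y + of_int m * b) + of_int n * d) = h (x + of_int m * a) (y + of_int m * b)"
    by (rule per_int1[OF C])
  also have "\<dots> = h x y" by (rule per_int1[OF A])
  finally show ?thesis .
qed

lemma per_cover:
  fixes a b c d x y :: real
  assumes det: "a * d - b * c \<noteq> 0"
  shows "\<exists>s t m n. 0 \<le> s \<and> s \<le> 1 \<and> 0 \<le> t \<and> t \<le> 1 \<and>
     x = (s * a + t * c) + of_int m * a + of_int n * c \<and> y = (s * b + t * d) + of_int m * b + of_int n * d"
proof -
  define S where "S = (x * d - y * c) / (a * d - b * c)"
  define T where "T = (y * a - x * b) / (a * d - b * c)"
  have "S * a + T * c = ((x * d - y * c) * a + (y * a - x * b) * c) / (a * d - b * c)"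
    by (simp add: S_def T_def add_divide_distrib)
  also have "\<dots> = x * (a * d - b * c) / (a * d - b * c)" by (simp add: algebra_simps)
  also have "\<dots> = x" using det by simp
  finally have x1: "x = S * a + T * c" by simp
  have "S * b + T * d = ((x * d - y * c) * b + (y * a - x * b) * d) / (a * d - b * c)"
    by (simp add: S_def T_def add_divide_distrib)
  also have "\<dots> = y * (a * d - b * c) / (a * d - b * c)" by (simp add: algebra_simps)
  also have "\<dots> = y" using det by simp
  finally have y1: "y = S * b + T * d" by simp
  note xy = x1 y1
  define s where "s = S - of_int \<lfloor>S\<rfloor>"
  define t where "t = T - of_int \<lfloor>T\<rfloor>"
  have "0 \<le> s" "s \<le> 1" "0 \<le> t" "t \<le> 1"
    unfolding s_def t_def using of_int_floor_le[of S] of_int_floor_le[of T] real_of_int_floor_add_one_gt[of S] real_of_int_floor_add_one_gt[of T]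
    by linarith+
  moreover have "x = (s * a + t * c) + of_int \<lfloor>S\<rfloor> * a + of_int \<lfloor>T\<rfloor> * c"
    "y = (s * b + t * d) + of_int \<lfloor>S\<rfloor> * b + of_int \<lfloor>T\<rfloor> * d"
    using xy by (auto simp: s_def t_def algebra_simps)
  ultimately show ?thesis by blast
qed

lemma Iq_zero_imp:
  assumes det: "a * d - b * c \<noteq> 0" and per: "gamma_periodic a b c d h" and ch: "cont2 h"
    and nn: "\<And>x y. 0 \<le> h x y" and z: "Iq a b c d h = 0"
  shows "h x y = 0"
proof -
  let ?F = "\<lambda>z::real\<times>real. h (fst z * a + snd z * c) (fst z * b + snd z * d)"
  have cF: "continuous_on Q01 ?F" by (rule cont2_comp_lin[OF ch])
  have hi: "(?F has_integral 0) Q01"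
    using z integrable_integral[OF integrable_continuous[OF cF]] unfolding Iq_def by simp
  have ne: "box (0::real,0::real) (1,1) \<noteq> {}"
  proof -
    have "(1/2, 1/2) \<in> box (0::real,0::real) (1,1)" by (auto simp: mem_box Basis_prod_def)
    thus ?thesis by blast
  qed
  have Z: "?F (s,t) = 0" if "0 \<le> s" "s \<le> 1" "0 \<le> t" "t \<le> 1" for s t
    by (rule has_integral_0_cbox_imp_0[OF cF _ hi ne]) (use nn that in \<open>auto simp: cbox_Pair_eq\<close>)
  obtain s t m n where stmn: "0 \<le> s" "s \<le> 1" "0 \<le> t" "t \<le> 1"
    "x = (s * a + t * c) + of_int m * a + of_int n * c" "y = (s * b + t * d) + of_int m * b + of_int n * d"
    using per_cover[OF det] by blast
  have "h x y = h (s * a + t * c) (s * b + t * d)"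
    unfolding stmn(5,6) by (rule per_shift[OF per])
  also have "\<dots> = 0" using Z[OF stmn(1-4)] by simp
  finally show ?thesis .
qed


lemma Iq_int: "cont2 f \<Longrightarrow> (\<lambda>z. f (fst z * a + snd z * c) (fst z * b + snd z * d)) integrable_on Q01"
  by (rule integrable_continuous, rule cont2_comp_lin)

lemma Iq_add: "cont2 f \<Longrightarrow> cont2 g \<Longrightarrow> Iq a b c d (\<lambda>x y. f x y + g x y) = Iq a b c d f + Iq a b c d g"
  unfolding Iq_def by (rule integral_add) (auto intro: Iq_int)
lemma Iq_diff: "cont2 f \<Longrightarrow> cont2 g \<Longrightarrow> Iq a b c d (\<lambda>x y. f x y - g x y) = Iq a b c d f - Iq a b c d g"
  unfolding Iq_def by (rule integral_diff) (auto intro: Iq_int)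
lemma Iq_cmult: "Iq a b c d (\<lambda>x y. k * f x y) = k * Iq a b c d f"
  unfolding Iq_def by (rule integral_mult_right)
lemma Iq_const: "Iq a b c d (\<lambda>x y. k) = k"
  unfolding Iq_def using Q01_int1 integral_mult_right[of Q01 k "\<lambda>z. 1::real"] by simp

lemma cont2_add: "cont2 f \<Longrightarrow> cont2 g \<Longrightarrow> cont2 (\<lambda>x y. f x y + g x y)"
  unfolding cont2_def by (intro continuous_intros)
lemma cont2_diff: "cont2 f \<Longrightarrow> cont2 g \<Longrightarrow> cont2 (\<lambda>x y. f x y - g x y)"
  unfolding cont2_def by (intro continuous_intros)
lemma cont2_mult: "cont2 f \<Longrightarrow> cont2 g \<Longrightarrow> cont2 (\<lambda>x y. f x y * g x y)"
  unfolding cont2_def by (intro continuous_intros)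
lemma cont2_cmult: "cont2 f \<Longrightarrow> cont2 (\<lambda>x y. k * f x y)"
  unfolding cont2_def by (intro continuous_intros)
lemma cont2_const: "cont2 (\<lambda>x y. k)"
  unfolding cont2_def by (intro continuous_intros)

lemma Iq_deriv0:
  assumes det: "a * d - b * c \<noteq> 0" and per: "gamma_periodic a b c d g" and g: "C1 g gx gy"
  shows "Iq a b c d gx = 0" "Iq a b c d gy = 0"
proof -
  have cx: "cont2 gx" and cy: "cont2 gy" using g by (auto simp: C1_def)
  note z = Iq_dir[OF per g]
  have "Iq a b c d (\<lambda>x y. (a * d - b * c) * gx x y)
      = Iq a b c d (\<lambda>x y. d * (a * gx x y + b * gy x y) - b * (c * gx x y + d * gy x y))"
    by (rule arg_cong[where f="Iq a b c d"]) (auto simp: fun_eq_iff algebra_simps)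
  also have "\<dots> = d * Iq a b c d (\<lambda>x y. a * gx x y + b * gy x y) - b * Iq a b c d (\<lambda>x y. c * gx x y + d * gy x y)"
    by (subst Iq_diff) (auto intro!: cont2_cmult cont2_add cx cy simp: Iq_cmult)
  finally show "Iq a b c d gx = 0" using z det by (simp add: Iq_cmult)
  have "Iq a b c d (\<lambda>x y. (a * d - b * c) * gy x y)
      = Iq a b c d (\<lambda>x y. a * (c * gx x y + d * gy x y) - c * (a * gx x y + b * gy x y))"
    by (rule arg_cong[where f="Iq a b c d"]) (auto simp: fun_eq_iff algebra_simps)
  also have "\<dots> = a * Iq a b c d (\<lambda>x y. c * gx x y + d * gy x y) - c * Iq a b c d (\<lambda>x y. a * gx x y + b * gy x y)"
    by (subst Iq_diff) (auto intro!: cont2_cmult cont2_add cx cy simp: Iq_cmult)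
  finally show "Iq a b c d gy = 0" using z det by (simp add: Iq_cmult)
qed

lemma C1_mult:
  assumes f: "C1 f fx fy" and g: "C1 g gx gy"
  shows "C1 (\<lambda>x y. f x y * g x y) (\<lambda>x y. fx x y * g x y + f x y * gx x y) (\<lambda>x y. fy x y * g x y + f x y * gy x y)"
  unfolding C1_def
proof (intro conjI allI)
  fix x y
  have "((\<lambda>z::real\<times>real. f (fst z) (snd z) * g (fst z) (snd z)) has_derivative
    (\<lambda>h. f x y * (gx x y * fst h + gy x y * snd h) + (fx x y * fst h + fy x y * snd h) * g x y)) (at (x,y))"
    using has_derivative_mult[OF f[unfolded C1_def, THEN conjunct1, rule_format, of x y]
                                g[unfolded C1_def, THEN conjunct1, rule_format, of x y]] by simp
  thus "((\<lambda>z::real\<times>real. f (fst z) (snd z) * g (fst z) (snd z)) has_derivative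
    (\<lambda>h. (fx x y * g x y + f x y * gx x y) * fst h + (fy x y * g x y + f x y * gy x y) * snd h)) (at (x,y))"
    by (rule has_derivative_eq_rhs) (auto simp: fun_eq_iff algebra_simps)
qed (use f g in \<open>auto simp: C1_def intro!: cont2_add cont2_mult\<close>)

lemma C1_add:
  assumes f: "C1 f fx fy" and g: "C1 g gx gy"
  shows "C1 (\<lambda>x y. f x y + g x y) (\<lambda>x y. fx x y + gx x y) (\<lambda>x y. fy x y + gy x y)"
  unfolding C1_def
proof (intro conjI allI)
  fix x y
  show "((\<lambda>z::real\<times>real. f (fst z) (snd z) + g (fst z) (snd z)) has_derivative
    (\<lambda>h. (fx x y + gx x y) * fst h + (fy x y + gy x y) * snd h)) (at (x,y))"
    using has_derivative_add[OF f[unfolded C1_def, THEN conjunct1, rule_format, of x y]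
                                g[unfolded C1_def, THEN conjunct1, rule_format, of x y]]
    by (rule has_derivative_eq_rhs) (auto simp: fun_eq_iff algebra_simps)
qed (use f g in \<open>auto simp: C1_def intro!: cont2_add\<close>)

lemma C1_diff:
  assumes f: "C1 f fx fy" and g: "C1 g gx gy"
  shows "C1 (\<lambda>x y. f x y - g x y) (\<lambda>x y. fx x y - gx x y) (\<lambda>x y. fy x y - gy x y)"
  unfolding C1_def
proof (intro conjI allI)
  fix x y
  show "((\<lambda>z::real\<times>real. f (fst z) (snd z) - g (fst z) (snd z)) has_derivative
    (\<lambda>h. (fx x y - gx x y) * fst h + (fy x y - gy x y) * snd h)) (at (x,y))"
    using has_derivative_diff[OF f[unfolded C1_def, THEN conjunct1, rule_format, of x y]
                                g[unfolded C1_def, THEN conjunct1, rule_format, of x y]]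
    by (rule has_derivative_eq_rhs) (auto simp: fun_eq_iff algebra_simps)
qed (use f g in \<open>auto simp: C1_def intro!: cont2_diff\<close>)

lemma C1_const: "C1 (\<lambda>x y. k) (\<lambda>x y. 0) (\<lambda>x y. 0)"
  unfolding C1_def by (auto intro!: derivative_eq_intros cont2_const)

lemma per_deriv:
  assumes per: "gamma_periodic a b c d g" and g: "C1 g gx gy"
  shows "gamma_periodic a b c d gx" "gamma_periodic a b c d gy"
proof -
  have px: "gx (x + p) (y + q) = gx x y" if pq: "\<forall>x y. g (x + p) (y + q) = g x y" for x y p q
  proof -
    have 1: "((\<lambda>t. g t (y + q)) has_real_derivative gx (x + p) (y + q)) (at (x + p))" by (rule C1_px[OF g])
    have "((\<lambda>t. g (t - p) y) has_real_derivative gx x y * 1) (at (x + p))"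
      by (rule DERIV_chain2[of "\<lambda>t. g t y"]) (use C1_px[OF g] in \<open>auto intro!: derivative_eq_intros\<close>)
    moreover have "(\<lambda>t. g (t - p) y) = (\<lambda>t. g t (y + q))"
    proof
      fix t show "g (t - p) y = g t (y + q)" using pq[rule_format, of "t - p" y] by simp
    qed
    ultimately have 2: "((\<lambda>t. g t (y + q)) has_real_derivative gx x y) (at (x + p))" by simp
    show ?thesis using DERIV_unique[OF 1 2] .
  qed
  have py: "gy (x + p) (y + q) = gy x y" if pq: "\<forall>x y. g (x + p) (y + q) = g x y" for x y p q
  proof -
    have 1: "((\<lambda>t. g (x + p) t) has_real_derivative gy (x + p) (y + q)) (at (y + q))" by (rule C1_py[OF g])
    have "((\<lambda>t. g x (t - q)) has_real_derivative gy x y * 1) (at (y + q))"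
      by (rule DERIV_chain2[of "\<lambda>t. g x t"]) (use C1_py[OF g] in \<open>auto intro!: derivative_eq_intros\<close>)
    moreover have "(\<lambda>t. g x (t - q)) = (\<lambda>t. g (x + p) t)"
    proof
      fix t show "g x (t - q) = g (x + p) t" using pq[rule_format, of x "t - q"] by simp
    qed
    ultimately have 2: "((\<lambda>t. g (x + p) t) has_real_derivative gy x y) (at (y + q))" by simp
    show ?thesis using DERIV_unique[OF 1 2] .
  qed
  show "gamma_periodic a b c d gx" "gamma_periodic a b c d gy"
    using per px py unfolding gamma_periodic_def by blast+
qed

lemma const_from_partials:
  assumes u: "C1 u ux uy" and zx: "\<And>x y. ux x y = 0" and zy: "\<And>x y. uy x y = 0"
  shows "u x y = u 0 0"
proof -
  have "u x y = u 0 y"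
    by (rule DERIV_isconst_all[of "\<lambda>t. u t y"]) (use C1_px[OF u] zx in metis)
  also have "\<dots> = u 0 0"
    by (rule DERIV_isconst_all[of "\<lambda>t. u 0 t"]) (use C1_py[OF u] zy in metis)
  finally show ?thesis .
qed

lemma harm:
  assumes det: "a * d - b * c \<noteq> 0"
    and pu: "gamma_periodic a b c d u" and pv: "gamma_periodic a b c d v"
    and u: "C1 u ux uy" and v: "C1 v vx vy" and vx: "C1 vx vxx vxy" and vy: "C1 vy vyx vyy"
    and cr1: "\<And>x y. ux x y = - vy x y" and cr2: "\<And>x y. uy x y = vx x y"
    and iu: "Iq a b c d u = 0" and iv: "Iq a b c d v = 0"
  shows "u x y = 0 \<and> v x y = 0"
proof -
  have pux: "gamma_periodic a b c d ux" "gamma_periodic a b c d uy" using per_deriv[OF pu u] by auto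
  have pvx: "gamma_periodic a b c d vx" "gamma_periodic a b c d vy" using per_deriv[OF pv v] by auto
  have cu: "cont2 u" "cont2 ux" "cont2 uy" using u by (auto simp: C1_def)
  have cv: "cont2 v" "cont2 vx" "cont2 vy" "cont2 vxx" "cont2 vxy" "cont2 vyx" "cont2 vyy"
    using v vx vy by (auto simp: C1_def)
  have sym: "vxy x y = vyx x y" for x y by (rule clairaut_C1[OF v vx vy])
  have pG1: "gamma_periodic a b c d (\<lambda>x y. u x y * vy x y)"
    using pu pvx(2) by (simp add: gamma_periodic_def)
  have pG2: "gamma_periodic a b c d (\<lambda>x y. u x y * vx x y)"
    using pu pvx(1) by (simp add: gamma_periodic_def)
  have I1: "Iq a b c d (\<lambda>x y. ux x y * vy x y + u x y * vyx x y) = 0"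
    using Iq_deriv0(1)[OF det pG1 C1_mult[OF u vy]] .
  have I2: "Iq a b c d (\<lambda>x y. uy x y * vx x y + u x y * vxy x y) = 0"
    using Iq_deriv0(2)[OF det pG2 C1_mult[OF u vx]] .
  have eqf: "(\<lambda>x y. ux x y * ux x y + uy x y * uy x y)
      = (\<lambda>x y. (uy x y * vx x y + u x y * vxy x y) - (ux x y * vy x y + u x y * vyx x y))"
    by (auto simp: fun_eq_iff cr1 cr2 sym algebra_simps)
  have c12: "cont2 (\<lambda>x y. ux x y * vy x y + u x y * vyx x y)" "cont2 (\<lambda>x y. uy x y * vx x y + u x y * vxy x y)"
    using cu cv by (auto intro!: cont2_add cont2_mult)
  have I0: "Iq a b c d (\<lambda>x y. ux x y * ux x y + uy x y * uy x y) = 0"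
    unfolding eqf using I1 I2 Iq_diff[OF c12(2) c12(1)] by simp
  have ph: "gamma_periodic a b c d (\<lambda>x y. ux x y * ux x y + uy x y * uy x y)"
    using pux by (simp add: gamma_periodic_def)
  have ch: "cont2 (\<lambda>x y. ux x y * ux x y + uy x y * uy x y)" using cu by (auto intro!: cont2_add cont2_mult)
  have h0: "ux x y * ux x y + uy x y * uy x y = 0" for x y
    by (rule Iq_zero_imp[OF det ph ch _ I0]) simp
  have zx: "ux x y = 0" and zy: "uy x y = 0" for x y
    using h0[of x y] by (auto simp: add_nonneg_eq_0_iff)
  have uc: "u x y = u 0 0" for x y by (rule const_from_partials[OF u zx zy])
  have "Iq a b c d u = u 0 0"
  proof -
    have "u = (\<lambda>x y. u 0 0)" using uc by (auto simp: fun_eq_iff)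
    hence "Iq a b c d u = Iq a b c d (\<lambda>x y. u 0 0)" by simp
    thus ?thesis by (simp add: Iq_const)
  qed
  hence u0: "u x y = 0" for x y using iu uc by simp
  have vzx: "vx x y = 0" and vzy: "vy x y = 0" for x y using zx zy cr1 cr2 by (metis neg_equal_0_iff_equal)+
  have vc: "v x y = v 0 0" for x y by (rule const_from_partials[OF v vzx vzy])
  have "Iq a b c d v = v 0 0"
  proof -
    have "v = (\<lambda>x y. v 0 0)" using vc by (auto simp: fun_eq_iff)
    hence "Iq a b c d v = Iq a b c d (\<lambda>x y. v 0 0)" by simp
    thus ?thesis by (simp add: Iq_const)
  qed
  hence "v x y = 0" for x y using iv vc by simp
  with u0 show ?thesis by simp
qed


inductive_set SP :: "(real \<Rightarrow> real \<Rightarrow> real) set" where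
  SP_mult: "smooth2 f \<Longrightarrow> smooth2 g \<Longrightarrow> (\<lambda>x y. f x y * g x y) \<in> SP"
| SP_add: "h1 \<in> SP \<Longrightarrow> h2 \<in> SP \<Longrightarrow> (\<lambda>x y. h1 x y + h2 x y) \<in> SP"

lemma SP_C1: "h \<in> SP \<Longrightarrow> \<exists>hx hy. C1 h hx hy \<and> hx \<in> SP \<and> hy \<in> SP"
proof (induction rule: SP.induct)
  case (SP_mult f g)
  have "C1 (\<lambda>x y. f x y * g x y) (\<lambda>x y. dx f x y * g x y + f x y * dx g x y) (\<lambda>x y. dy f x y * g x y + f x y * dy g x y)"
    by (rule C1_mult[OF smooth2_C1[OF SP_mult(1)] smooth2_C1[OF SP_mult(2)]])
  moreover have "(\<lambda>x y. dx f x y * g x y + f x y * dx g x y) \<in> SP" "(\<lambda>x y. dy f x y * g x y + f x y * dy g x y) \<in> SP"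
    using SP_mult smooth2_dx smooth2_dy by (auto intro!: SP.intros)
  ultimately show ?case by blast
next
  case (SP_add h1 h2)
  then obtain h1x h1y h2x h2y where "C1 h1 h1x h1y" "h1x \<in> SP" "h1y \<in> SP" "C1 h2 h2x h2y" "h2x \<in> SP" "h2y \<in> SP"
    by blast
  then show ?case using C1_add by (blast intro: SP.intros)
qed

lemma SP_dx: "h \<in> SP \<Longrightarrow> dx h \<in> SP"
proof -
  assume "h \<in> SP"
  then obtain hx hy where "C1 h hx hy" "hx \<in> SP" using SP_C1 by blast
  thus ?thesis using C1_dx by simp
qed
lemma SP_dy: "h \<in> SP \<Longrightarrow> dy h \<in> SP"
proof -
  assume "h \<in> SP"
  then obtain hx hy where "C1 h hx hy" "hy \<in> SP" using SP_C1 by blast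
  thus ?thesis using C1_dy by simp
qed
lemma SP_P: "h \<in> SP \<Longrightarrow> continuous_on UNIV (\<lambda>z::real\<times>real. h (fst z) (snd z))
      \<and> (\<lambda>z::real\<times>real. h (fst z) (snd z)) differentiable_on UNIV"
proof -
  assume "h \<in> SP"
  then obtain hx hy where C: "C1 h hx hy" using SP_C1 by blast
  have "(\<lambda>z::real\<times>real. h (fst z) (snd z)) differentiable (at z)" for z
  proof -
    obtain x y where z: "z = (x,y)" by (cases z)
    show ?thesis using C unfolding C1_def differentiable_def z by blast
  qed
  then show ?thesis using C unfolding C1_def cont2_def differentiable_on_def
    by (auto intro: differentiable_at_withinI)
qed

lemma SP_smooth: "h \<in> SP \<Longrightarrow> smooth2 h"
proof -
  have "\<forall>h. h \<in> SP \<longrightarrow> continuous_on UNIV (\<lambda>z::real\<times>real. iter_pd bs h (fst z) (snd z))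
      \<and> (\<lambda>z::real\<times>real. iter_pd bs h (fst z) (snd z)) differentiable_on UNIV" for bs
  proof (induction bs rule: rev_induct)
    case Nil then show ?case using SP_P by simp
  next
    case (snoc b bs)
    show ?case
    proof (intro allI impI)
      fix h assume h: "h \<in> SP"
      have "(if b then dx else dy) h \<in> SP" using h SP_dx SP_dy by simp
      then show "continuous_on UNIV (\<lambda>z::real\<times>real. iter_pd (bs @ [b]) h (fst z) (snd z))
      \<and> (\<lambda>z::real\<times>real. iter_pd (bs @ [b]) h (fst z) (snd z)) differentiable_on UNIV"
        using snoc.IH by (simp add: iter_pd_snoc)
    qed
  qed
  thus "h \<in> SP \<Longrightarrow> smooth2 h" unfolding smooth2_def by blast
qed

lemma iter_pd_const: "iter_pd bs (\<lambda>x y. k) = (\<lambda>x y. if bs = [] then k else 0)"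
proof (induction bs)
  case Nil then show ?case by simp
next
  case (Cons b bs)
  then show ?case by (cases bs) (auto simp: dx_def dy_def fun_eq_iff)
qed

lemma smooth2_const: "smooth2 (\<lambda>x y. k)"
  unfolding smooth2_def iter_pd_const
  by (auto intro!: continuous_intros derivative_intros simp: differentiable_on_def)

lemma smooth2_mult: "smooth2 f \<Longrightarrow> smooth2 g \<Longrightarrow> smooth2 (\<lambda>x y. f x y * g x y)"
  by (rule SP_smooth, rule SP_mult)
lemma smooth2_cmult: "smooth2 f \<Longrightarrow> smooth2 (\<lambda>x y. k * f x y)"
  using smooth2_mult[OF smooth2_const[of k]] by simp
lemma smooth2_add: "smooth2 f \<Longrightarrow> smooth2 g \<Longrightarrow> smooth2 (\<lambda>x y. f x y + g x y)"
proof -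
  assume f: "smooth2 f" and g: "smooth2 g"
  have "(\<lambda>x y. f x y * 1 + g x y * 1) \<in> SP"
    using SP_add[OF SP_mult[OF f smooth2_const[of 1]] SP_mult[OF g smooth2_const[of 1]]] by simp
  thus ?thesis using SP_smooth by simp
qed
lemma smooth2_diff: "smooth2 f \<Longrightarrow> smooth2 g \<Longrightarrow> smooth2 (\<lambda>x y. f x y - g x y)"
proof -
  assume f: "smooth2 f" and g: "smooth2 g"
  have "(\<lambda>x y. f x y * 1 + g x y * (-1)) \<in> SP"
    using SP_add[OF SP_mult[OF f smooth2_const[of 1]] SP_mult[OF g smooth2_const[of "-1"]]] by simp
  thus ?thesis using SP_smooth by simp
qed

lemma dx_mult: "smooth2 f \<Longrightarrow> smooth2 g \<Longrightarrow> dx (\<lambda>x y. f x y * g x y) = (\<lambda>x y. dx f x y * g x y + f x y * dx g x y)"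
  by (rule C1_dx, rule C1_mult; rule smooth2_C1)
lemma dy_mult: "smooth2 f \<Longrightarrow> smooth2 g \<Longrightarrow> dy (\<lambda>x y. f x y * g x y) = (\<lambda>x y. dy f x y * g x y + f x y * dy g x y)"
  by (rule C1_dy, rule C1_mult; rule smooth2_C1)
lemma dx_add: "smooth2 f \<Longrightarrow> smooth2 g \<Longrightarrow> dx (\<lambda>x y. f x y + g x y) = (\<lambda>x y. dx f x y + dx g x y)"
  by (rule C1_dx, rule C1_add; rule smooth2_C1)
lemma dy_add: "smooth2 f \<Longrightarrow> smooth2 g \<Longrightarrow> dy (\<lambda>x y. f x y + g x y) = (\<lambda>x y. dy f x y + dy g x y)"
  by (rule C1_dy, rule C1_add; rule smooth2_C1)
lemma dx_diff: "smooth2 f \<Longrightarrow> smooth2 g \<Longrightarrow> dx (\<lambda>x y. f x y - g x y) = (\<lambda>x y. dx f x y - dx g x y)"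
  by (rule C1_dx, rule C1_diff; rule smooth2_C1)
lemma dy_diff: "smooth2 f \<Longrightarrow> smooth2 g \<Longrightarrow> dy (\<lambda>x y. f x y - g x y) = (\<lambda>x y. dy f x y - dy g x y)"
  by (rule C1_dy, rule C1_diff; rule smooth2_C1)
lemma dx_const: "dx (\<lambda>x y. k) = (\<lambda>x y. 0)" by (simp add: dx_def)
lemma dy_const: "dy (\<lambda>x y. k) = (\<lambda>x y. 0)" by (simp add: dy_def)
lemma dx_cmult: "smooth2 f \<Longrightarrow> dx (\<lambda>x y. k * f x y) = (\<lambda>x y. k * dx f x y)"
  using dx_mult[OF smooth2_const[of k]] dx_const by simp
lemma dy_cmult: "smooth2 f \<Longrightarrow> dy (\<lambda>x y. k * f x y) = (\<lambda>x y. k * dy f x y)"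
  using dy_mult[OF smooth2_const[of k]] dy_const by simp


lemma final_alg:
  fixes c2 L Lx Ly Lxx Lyy Lxy a11 a22 a12 lxx lxy lyy lxxx lxxy lxyy lyyy lxxxx lxxxy lxxyy lxyyy lyyyy :: real
  assumes h1: "2*c2*Lx = lxxx + lxyy" and h2: "2*c2*Ly = lxxy + lyyy"
    and h3: "2*c2*Lxx = lxxxx + lxxyy" and h4: "2*c2*Lyy = lxxyy + lyyyy"
    and h5: "2*c2*Lxy = lxxxy + lxyyy" and h6: "2*c2*L = lxx + lyy + (2*a11 + 2*a22)"
    and C: "-(Lyy * (lxy + 2*a12) + Ly * lxyy)
         = (2 * (Lxy * (lyy + 2*a22) + Ly * lxyy) - (Lxx * (lxy + 2*a12) + Lx * lxxy))
           - 2 * (Lx * lxxy + L * lxxxy)"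
  shows "lxy * (lyyyy - lxxxx) + 3 * (lyyy * lxyy - lxxy * lxxx) + 2 * (lyy * lxyyy - lxx * lxxxy)
       + 4 * a22 * lxyyy - 4 * a11 * lxxxy + 2 * a12 * (lyyyy - lxxxx) = 0"
proof -
  have "2*c2*(-(Lyy * (lxy + 2*a12) + Ly * lxyy)) = 2*c2*((2 * (Lxy * (lyy + 2*a22) + Ly * lxyy) - (Lxx * (lxy + 2*a12) + Lx * lxxy))
           - 2 * (Lx * lxxy + L * lxxxy))" using C by simp
  hence "-((2*c2*Lyy) * (lxy + 2*a12) + (2*c2*Ly) * lxyy)
       = -((2*c2*Lxx) * (lxy + 2*a12) + (2*c2*Lx) * lxxy) + 2 * ((2*c2*Lxy) * (lyy + 2*a22) + (2*c2*Ly) * lxyy)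
           - 2 * ((2*c2*Lx) * lxxy + (2*c2*L) * lxxxy)"
    by (simp add: algebra_simps)
  hence "-((lxxyy + lyyyy) * (lxy + 2*a12) + (lxxy + lyyy) * lxyy)
       = -((lxxxx + lxxyy) * (lxy + 2*a12) + (lxxx + lxyy) * lxxy) + 2 * ((lxxxy + lxyyy) * (lyy + 2*a22) + (lxxy + lyyy) * lxyy)
           - 2 * ((lxxx + lxyy) * lxxy + (lxx + lyy + (2*a11 + 2*a22)) * lxxxy)"
    unfolding h1 h2 h3 h4 h5 h6 .
  thus ?thesis by (simp add: algebra_simps)
qed

lemma compat_alg:
  fixes L Lx Ly a0 a1 a2 ax0 ax1 ax2 ay0 ay1 ay2 c2 :: real
  assumes E0: "4*Lx*a0 + Ly*a1 + 2*L*ax0 = 0"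
    and E1: "3*Lx*a1 + 2*Ly*a2 + 2*L*(ax1 + ay0) = 0"
    and E2: "2*Lx*a2 + 3*Ly*a1 + 4*Lx*a0 + Ly*a1 + 2*L*(ax2 + ay1) = 0"
    and E3: "Lx*a1 + 4*Ly*(c2 + a2 - a0) + 3*Lx*a1 + 2*Ly*a2 + 2*L*(ax1 + ay2) = 0"
  shows "(-(2*ay0) + ay2) * L + (2*c2 - 2*a0 + a2) * Ly = ax1 * L + a1 * Lx"
    and "ay1 * L + a1 * Ly = (2*ax0 - ax2) * L + (2*a0 - a2) * Lx"
    and "2*L*Lx*a0 + L*L*ax0 = -(1/2) * (Ly * (a1 * L))"
    and "2*L*Ly*a0 + L*L*ay0 = (1/2)*(-(Lx*(a1*L)) + 2*Ly*((2*a0 - a2)*L) - 2*L*(ax1*L + a1*Lx))"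
proof -
  have "(-(2*ay0) + ay2) * L + (2*c2 - 2*a0 + a2) * Ly - (ax1 * L + a1 * Lx)
      = (1/2) * (Lx*a1 + 4*Ly*(c2 + a2 - a0) + 3*Lx*a1 + 2*Ly*a2 + 2*L*(ax1 + ay2))
        - (3*Lx*a1 + 2*Ly*a2 + 2*L*(ax1 + ay0))" by (simp add: algebra_simps)
  thus "(-(2*ay0) + ay2) * L + (2*c2 - 2*a0 + a2) * Ly = ax1 * L + a1 * Lx" unfolding E1 E3 by simp
  have "(ay1 * L + a1 * Ly) - ((2*ax0 - ax2) * L + (2*a0 - a2) * Lx)
      = (1/2) * (2*Lx*a2 + 3*Ly*a1 + 4*Lx*a0 + Ly*a1 + 2*L*(ax2 + ay1)) - (4*Lx*a0 + Ly*a1 + 2*L*ax0)"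
    by (simp add: algebra_simps)
  thus "ay1 * L + a1 * Ly = (2*ax0 - ax2) * L + (2*a0 - a2) * Lx" unfolding E0 E2 by simp
  have "2*L*Lx*a0 + L*L*ax0 - (-(1/2) * (Ly * (a1 * L))) = (L/2) * (4*Lx*a0 + Ly*a1 + 2*L*ax0)"
    by (simp add: algebra_simps)
  thus "2*L*Lx*a0 + L*L*ax0 = -(1/2) * (Ly * (a1 * L))" unfolding E0 by simp
  have "2*L*Ly*a0 + L*L*ay0 - (1/2)*(-(Lx*(a1*L)) + 2*Ly*((2*a0 - a2)*L) - 2*L*(ax1*L + a1*Lx))
      = (L/2) * (3*Lx*a1 + 2*Ly*a2 + 2*L*(ax1 + ay0))"
    by (simp add: algebra_simps)
  thus "2*L*Ly*a0 + L*L*ay0 = (1/2)*(-(Lx*(a1*L)) + 2*Ly*((2*a0 - a2)*L) - 2*L*(ax1*L + a1*Lx))"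
    unfolding E1 by simp
qed


lemma per_dx: "smooth2 g \<Longrightarrow> gamma_periodic a b c d g \<Longrightarrow> gamma_periodic a b c d (dx g)"
  using per_deriv(1)[OF _ smooth2_C1] by blast
lemma per_dy: "smooth2 g \<Longrightarrow> gamma_periodic a b c d g \<Longrightarrow> gamma_periodic a b c d (dy g)"
  using per_deriv(2)[OF _ smooth2_C1] by blast

lemma half_eq: "-(1/2) * (X::real) = 1/2 * Y \<Longrightarrow> -X = Y"
proof -
  assume h: "-(1/2) * (X::real) = 1/2 * Y"
  have "-X = 2 * (-(1/2) * X)" by simp
  also have "\<dots> = 2 * (1/2 * Y)" using h by simp
  also have "\<dots> = Y" by simp
  finally show "-X = Y" .
qed

theorem theorem4:
  fixes a b c d c\<^sub>2 :: real
    and \<Lambda> lam :: "real \<Rightarrow> real \<Rightarrow> real"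
    and A :: "nat \<Rightarrow> real \<Rightarrow> real \<Rightarrow> real"
  assumes lat: "lattice_basis a b c d"
    and \<Lambda>_pos: "\<And>x y. \<Lambda> x y > 0"
    and \<Lambda>_smooth: "smooth2 \<Lambda>" and \<Lambda>_per: "gamma_periodic a b c d \<Lambda>"
    and A_smooth: "\<And>i. i \<le> 4 \<Longrightarrow> smooth2 (A i)"
    and A_per: "\<And>i. i \<le> 4 \<Longrightarrow> gamma_periodic a b c d (A i)"
    and integral: "\<And>x y p1 p2. poisson
        (\<lambda>x y p1 p2. (p1\<^sup>2 + p2\<^sup>2) / (2 * \<Lambda> x y))
        (\<lambda>x y p1 p2. \<Sum>i\<le>4. A i x y * p1 ^ (4 - i) * p2 ^ i) x y p1 p2 = 0"
    and kol1: "A 3 = A 1"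
    and kol2: "A 4 = (\<lambda>x y. c\<^sub>2 + A 2 x y - A 0 x y)"
    and lam_smooth: "smooth2 lam" and lam_per: "gamma_periodic a b c d lam"
    and lam_eq: "\<And>x y. dx (dx lam) x y + dy (dy lam) x y =
        2 * c\<^sub>2 * \<Lambda> x y
        - 2 * ((1/2) * avg a b c d (\<lambda>x y. (2 * c\<^sub>2 - 2 * A 0 x y + A 2 x y) * \<Lambda> x y))
        - 2 * ((1/2) * avg a b c d (\<lambda>x y. (2 * A 0 x y - A 2 x y) * \<Lambda> x y))"
  shows "let a11 = (1/2) * avg a b c d (\<lambda>x y. (2 * c\<^sub>2 - 2 * A 0 x y + A 2 x y) * \<Lambda> x y);
             a22 = (1/2) * avg a b c d (\<lambda>x y. (2 * A 0 x y - A 2 x y) * \<Lambda> x y);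
             a12 = (1/2) * avg a b c d (\<lambda>x y. A 1 x y * \<Lambda> x y)
         in \<forall>x y.
           dx (dy lam) x y * (dy (dy (dy (dy lam))) x y - dx (dx (dx (dx lam))) x y)
         + 3 * (dy (dy (dy lam)) x y * dx (dy (dy lam)) x y - dx (dx (dy lam)) x y * dx (dx (dx lam)) x y)
         + 2 * (dy (dy lam) x y * dx (dy (dy (dy lam))) x y - dx (dx lam) x y * dx (dx (dx (dy lam))) x y)
         + 4 * a22 * dx (dy (dy (dy lam))) x y - 4 * a11 * dx (dx (dx (dy lam))) x y
         + 2 * a12 * (dy (dy (dy (dy lam))) x y - dx (dx (dx (dx lam))) x y) = 0"
proof -
  have det: "a * d - b * c \<noteq> 0" using lat by (simp add: lattice_basis_def)
  note sL = \<Lambda>_smooth and slam = lam_smooth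
  have sA0: "smooth2 (A 0)" and sA1: "smooth2 (A 1)" and sA2: "smooth2 (A 2)" using A_smooth by auto
  have pA0: "gamma_periodic a b c d (A 0)" and pA1: "gamma_periodic a b c d (A 1)"
    and pA2: "gamma_periodic a b c d (A 2)" using A_per by auto
  define X11 where "X11 = (\<lambda>x y. (2 * c\<^sub>2 - 2 * A 0 x y + A 2 x y) * \<Lambda> x y)"
  define X22 where "X22 = (\<lambda>x y. (2 * A 0 x y - A 2 x y) * \<Lambda> x y)"
  define X12 where "X12 = (\<lambda>x y. A 1 x y * \<Lambda> x y)"
  define a11 where "a11 = (1/2) * avg a b c d X11"
  define a22 where "a22 = (1/2) * avg a b c d X22"
  define a12 where "a12 = (1/2) * avg a b c d X12"
  have sX11: "smooth2 X11" unfolding X11_def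
    by (intro smooth2_mult smooth2_add smooth2_diff smooth2_const smooth2_cmult sA0 sA2 sL)
  have sX22: "smooth2 X22" unfolding X22_def
    by (intro smooth2_mult smooth2_add smooth2_diff smooth2_const smooth2_cmult sA0 sA2 sL)
  have sX12: "smooth2 X12" unfolding X12_def
    by (intro smooth2_mult sA1 sL)
  have pX11: "gamma_periodic a b c d X11" using pA0 pA2 \<Lambda>_per by (simp add: gamma_periodic_def X11_def)
  have pX22: "gamma_periodic a b c d X22" using pA0 pA2 \<Lambda>_per by (simp add: gamma_periodic_def X22_def)
  have pX12: "gamma_periodic a b c d X12" using pA1 \<Lambda>_per by (simp add: gamma_periodic_def X12_def)
  have sumX: "X11 x y + X22 x y = 2 * c\<^sub>2 * \<Lambda> x y" for x y by (simp add: X11_def X22_def algebra_simps)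
  have leq: "dx (dx lam) x y + dy (dy lam) x y = 2 * c\<^sub>2 * \<Lambda> x y - 2 * a11 - 2 * a22" for x y
    using lam_eq[of x y] by (simp add: a11_def a22_def X11_def X22_def)
  have sA1': "smooth2 (A (Suc 0))" using sA1 by simp
  note sm = sL slam sA0 sA1 sA1' sA2 smooth2_dx smooth2_dy smooth2_add smooth2_diff smooth2_mult smooth2_cmult smooth2_const
  note dr = dx_mult dy_mult dx_add dy_add dx_diff dy_diff dx_cmult dy_cmult dx_const dy_const
  have CP: "(-(2*dy (A 0) x y) + dy (A 2) x y) * \<Lambda> x y + (2*c\<^sub>2 - 2*A 0 x y + A 2 x y) * dy \<Lambda> x y
              = dx (A 1) x y * \<Lambda> x y + A 1 x y * dx \<Lambda> x y"
    "dy (A 1) x y * \<Lambda> x y + A 1 x y * dy \<Lambda> x y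
              = (2*dx (A 0) x y - dx (A 2) x y) * \<Lambda> x y + (2*A 0 x y - A 2 x y) * dx \<Lambda> x y"
    "2*\<Lambda> x y*dx \<Lambda> x y*A 0 x y + \<Lambda> x y*\<Lambda> x y*dx (A 0) x y = -(1/2) * (dy \<Lambda> x y * (A 1 x y * \<Lambda> x y))"
    "2*\<Lambda> x y*dy \<Lambda> x y*A 0 x y + \<Lambda> x y*\<Lambda> x y*dy (A 0) x y = (1/2)*(-(dx \<Lambda> x y*(A 1 x y*\<Lambda> x y))
        + 2*dy \<Lambda> x y*((2*A 0 x y - A 2 x y)*\<Lambda> x y) - 2*\<Lambda> x y*(dx (A 1) x y*\<Lambda> x y + A 1 x y*dx \<Lambda> x y))"
    for x y
  proof -
    note KE = killing[OF \<Lambda>_pos sL A_smooth integral, where x=x and y=y]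
    have E2: "2 * dx \<Lambda> x y * A 2 x y + 3 * dy \<Lambda> x y * A 1 x y + 4 * dx \<Lambda> x y * A 0 x y + dy \<Lambda> x y * A 1 x y
        + 2 * \<Lambda> x y * (dx (A 2) x y + dy (A 1) x y) = 0"
      using KE(3) by (simp only: kol1)
    have E3: "dx \<Lambda> x y * A 1 x y + 4 * dy \<Lambda> x y * (c\<^sub>2 + A 2 x y - A 0 x y) + 3 * dx \<Lambda> x y * A 1 x y + 2 * dy \<Lambda> x y * A 2 x y
        + 2 * \<Lambda> x y * (dx (A 1) x y + dy (A 2) x y) = 0"
      using KE(4) by (simp only: kol1 kol2)
    note cc = compat_alg[OF KE(1) KE(2) E2 E3]
    show "(-(2*dy (A 0) x y) + dy (A 2) x y) * \<Lambda> x y + (2*c\<^sub>2 - 2*A 0 x y + A 2 x y) * dy \<Lambda> x y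
              = dx (A 1) x y * \<Lambda> x y + A 1 x y * dx \<Lambda> x y" by (rule cc(1))
    show "dy (A 1) x y * \<Lambda> x y + A 1 x y * dy \<Lambda> x y
              = (2*dx (A 0) x y - dx (A 2) x y) * \<Lambda> x y + (2*A 0 x y - A 2 x y) * dx \<Lambda> x y" by (rule cc(2))
    show "2*\<Lambda> x y*dx \<Lambda> x y*A 0 x y + \<Lambda> x y*\<Lambda> x y*dx (A 0) x y = -(1/2) * (dy \<Lambda> x y * (A 1 x y * \<Lambda> x y))"
      by (rule cc(3))
    show "2*\<Lambda> x y*dy \<Lambda> x y*A 0 x y + \<Lambda> x y*\<Lambda> x y*dy (A 0) x y = (1/2)*(-(dx \<Lambda> x y*(A 1 x y*\<Lambda> x y))
        + 2*dy \<Lambda> x y*((2*A 0 x y - A 2 x y)*\<Lambda> x y) - 2*\<Lambda> x y*(dx (A 1) x y*\<Lambda> x y + A 1 x y*dx \<Lambda> x y))"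
      by (rule cc(4))
  qed
  have dyX11: "dy X11 x y = (-(2*dy (A 0) x y) + dy (A 2) x y) * \<Lambda> x y + (2*c\<^sub>2 - 2*A 0 x y + A 2 x y) * dy \<Lambda> x y" for x y
    unfolding X11_def by (simp add: sm dr)
  have dxX12: "dx X12 x y = dx (A 1) x y * \<Lambda> x y + A 1 x y * dx \<Lambda> x y" for x y
    unfolding X12_def by (simp add: sm dr)
  have dyX12: "dy X12 x y = dy (A 1) x y * \<Lambda> x y + A 1 x y * dy \<Lambda> x y" for x y
    unfolding X12_def by (simp add: sm dr)
  have dxX22: "dx X22 x y = (2*dx (A 0) x y - dx (A 2) x y) * \<Lambda> x y + (2*A 0 x y - A 2 x y) * dx \<Lambda> x y" for x y
    unfolding X22_def by (simp add: sm dr)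
  note comm = smooth2_comm
  define u where "u = (\<lambda>x y. dx (dx lam) x y - (X11 x y - 2*a11))"
  define v where "v = (\<lambda>x y. dx (dy lam) x y - (X12 x y - 2*a12))"
  have u_alt: "u = (\<lambda>x y. (X22 x y - 2*a22) - dy (dy lam) x y)"
  proof (intro ext)
    fix x y
    show "u x y = (X22 x y - 2*a22) - dy (dy lam) x y"
      using leq[of x y] sumX[of x y] unfolding u_def by linarith
  qed
  have su: "smooth2 u" unfolding u_def using sX11 by (simp add: sm)
  have sv: "smooth2 v" unfolding v_def using sX12 by (simp add: sm)
  have plam: "gamma_periodic a b c d (dx (dx lam))" "gamma_periodic a b c d (dx (dy lam))"
    using per_dx per_dy slam lam_per smooth2_dx smooth2_dy by blast+
  have pu: "gamma_periodic a b c d u" using plam pX11 unfolding u_def gamma_periodic_def by simp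
  have pv: "gamma_periodic a b c d v" using plam pX12 unfolding v_def gamma_periodic_def by simp
  have dxu: "dx u x y = dx X22 x y - dx (dy (dy lam)) x y" for x y
    unfolding u_alt using sX22 by (simp add: sm dr)
  have dyu: "dy u x y = dx (dx (dy lam)) x y - dy X11 x y" for x y
    unfolding u_def using sX11 by (simp add: sm dr comm)
  have dxv: "dx v x y = dx (dx (dy lam)) x y - dx X12 x y" for x y
    unfolding v_def using sX12 by (simp add: sm dr comm)
  have dyv: "dy v x y = dx (dy (dy lam)) x y - dy X12 x y" for x y
    unfolding v_def using sX12 by (simp add: sm dr comm)
  have cr1: "dx u x y = - dy v x y" for x y using dxu dyv dxX22 dyX12 CP(2)[of x y] by simp
  have cr2: "dy u x y = dx v x y" for x y using dyu dxv dyX11 dxX12 CP(1)[of x y] by simp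
  have cX11: "cont2 X11" and cX12: "cont2 X12" using sX11 sX12 smooth2_cont by auto
  have a11I: "a11 = (1/2) * Iq a b c d X11" unfolding a11_def using avg_Iq[OF det cX11] by simp
  have a12I: "a12 = (1/2) * Iq a b c d X12" unfolding a12_def using avg_Iq[OF det cX12] by simp
  have Ixx: "Iq a b c d (dx (dx lam)) = 0"
    by (rule Iq_deriv0(1)[OF det per_dx[OF slam lam_per] smooth2_C1[OF smooth2_dx[OF slam]]])
  have Ixy: "Iq a b c d (dx (dy lam)) = 0"
    by (rule Iq_deriv0(1)[OF det per_dy[OF slam lam_per] smooth2_C1[OF smooth2_dy[OF slam]]])
  have iu: "Iq a b c d u = 0"
  proof -
    have c1: "cont2 (dx (dx lam))" using slam by (simp add: smooth2_cont sm)
    have c2: "cont2 (\<lambda>x y. X11 x y - 2*a11)" using cX11 cont2_const by (rule cont2_diff)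
    have "Iq a b c d u = Iq a b c d (dx (dx lam)) - Iq a b c d (\<lambda>x y. X11 x y - 2*a11)"
      unfolding u_def using Iq_diff[OF c1 c2] by simp
    also have "Iq a b c d (\<lambda>x y. X11 x y - 2*a11) = Iq a b c d X11 - 2*a11"
      using Iq_diff[OF cX11 cont2_const, of a b c d "2*a11"] Iq_const by simp
    finally show ?thesis using Ixx a11I by simp
  qed
  have iv: "Iq a b c d v = 0"
  proof -
    have c1: "cont2 (dx (dy lam))" using slam by (simp add: smooth2_cont sm)
    have c2: "cont2 (\<lambda>x y. X12 x y - 2*a12)" using cX12 cont2_const by (rule cont2_diff)
    have "Iq a b c d v = Iq a b c d (dx (dy lam)) - Iq a b c d (\<lambda>x y. X12 x y - 2*a12)"
      unfolding v_def using Iq_diff[OF c1 c2] by simp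
    also have "Iq a b c d (\<lambda>x y. X12 x y - 2*a12) = Iq a b c d X12 - 2*a12"
      using Iq_diff[OF cX12 cont2_const, of a b c d "2*a12"] Iq_const by simp
    finally show ?thesis using Ixy a12I by simp
  qed
  have uv0: "u x y = 0 \<and> v x y = 0" for x y
    by (rule harm[OF det pu pv smooth2_C1[OF su] smooth2_C1[OF sv] smooth2_C1[OF smooth2_dx[OF sv]]
          smooth2_C1[OF smooth2_dy[OF sv]] cr1 cr2 iu iv])
  have Fxy: "X12 x y = dx (dy lam) x y + 2*a12" for x y using uv0[of x y] unfolding v_def by simp
  have Fyy: "X22 x y = dy (dy lam) x y + 2*a22" for x y using uv0[of x y] unfolding u_alt by simp
  define B where "B = (\<lambda>x y. dx (dy lam) x y + 2*a12)"
  define S where "S = (\<lambda>x y. dy (dy lam) x y + 2*a22)"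
  have sB: "smooth2 B" unfolding B_def by (simp add: sm)
  have sS: "smooth2 S" unfolding S_def by (simp add: sm)
  have X12B: "X12 = B" using Fxy by (auto simp: B_def fun_eq_iff)
  have dxB: "dx B = dx (dx (dy lam))" unfolding B_def by (simp add: sm dr)
  have dyB: "dy B = dx (dy (dy lam))" unfolding B_def by (simp add: sm dr comm)
  have dxS: "dx S = dx (dy (dy lam))" unfolding S_def by (simp add: sm dr)
  define b0 where "b0 = (\<lambda>x y. A 0 x y * (\<Lambda> x y * \<Lambda> x y))"
  have sb0: "smooth2 b0" unfolding b0_def by (simp add: sm)
  define F1 where "F1 = (\<lambda>x y. (-(1/2)) * (dy \<Lambda> x y * B x y))"
  define F2 where "F2 = (\<lambda>x y. (1/2) * ((2 * (dy \<Lambda> x y * S x y) - dx \<Lambda> x y * B x y)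
                          - 2 * (\<Lambda> x y * dx (dx (dy lam)) x y)))"
  have dxb0: "dx b0 = F1"
  proof (intro ext)
    fix x y
    have "dx b0 x y = 2*\<Lambda> x y*dx \<Lambda> x y*A 0 x y + \<Lambda> x y*\<Lambda> x y*dx (A 0) x y"
      unfolding b0_def by (simp add: sm dr algebra_simps)
    also have "\<dots> = -(1/2) * (dy \<Lambda> x y * (A 1 x y * \<Lambda> x y))" by (rule CP(3))
    also have "A 1 x y * \<Lambda> x y = B x y" using X12B by (simp add: X12_def fun_eq_iff)
    finally show "dx b0 x y = F1 x y" by (simp add: F1_def)
  qed
  have dyb0: "dy b0 = F2"
  proof (intro ext)
    fix x y
    have "dy b0 x y = 2*\<Lambda> x y*dy \<Lambda> x y*A 0 x y + \<Lambda> x y*\<Lambda> x y*dy (A 0) x y"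
      unfolding b0_def by (simp add: sm dr algebra_simps)
    also have "\<dots> = (1/2)*(-(dx \<Lambda> x y*(A 1 x y*\<Lambda> x y))
        + 2*dy \<Lambda> x y*((2*A 0 x y - A 2 x y)*\<Lambda> x y) - 2*\<Lambda> x y*(dx (A 1) x y*\<Lambda> x y + A 1 x y*dx \<Lambda> x y))"
      by (rule CP(4))
    also have "A 1 x y * \<Lambda> x y = B x y" using X12B by (simp add: X12_def fun_eq_iff)
    also have "(2*A 0 x y - A 2 x y)*\<Lambda> x y = S x y" using Fyy[of x y] by (simp add: X22_def S_def)
    also have "dx (A 1) x y*\<Lambda> x y + A 1 x y*dx \<Lambda> x y = dx (dx (dy lam)) x y"
      using dxX12[of x y] X12B dxB by simp
    finally show "dy b0 x y = F2 x y" by (simp add: F2_def algebra_simps)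
  qed
  have FF: "dy F1 = dx F2" using comm[OF sb0] dxb0 dyb0 by simp
  have dyF1: "dy F1 x y = (-(1/2)) * (dy (dy \<Lambda>) x y * B x y + dy \<Lambda> x y * dx (dy (dy lam)) x y)" for x y
    unfolding F1_def by (simp only: dy_cmult dy_mult smooth2_mult smooth2_dy sL sB dyB)
  have dxF2: "dx F2 x y = (1/2) * ((2 * (dx (dy \<Lambda>) x y * S x y + dy \<Lambda> x y * dx (dy (dy lam)) x y)
        - (dx (dx \<Lambda>) x y * B x y + dx \<Lambda> x y * dx (dx (dy lam)) x y))
        - 2 * (dx \<Lambda> x y * dx (dx (dy lam)) x y + \<Lambda> x y * dx (dx (dx (dy lam))) x y))" for x y
    unfolding F2_def
    by (simp only: dx_cmult dx_mult dx_diff smooth2_mult smooth2_cmult smooth2_diff smooth2_dx smooth2_dy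
          sL sB sS slam dxB dxS)
  have LL: "(\<lambda>x y. 2*c\<^sub>2*\<Lambda> x y) = (\<lambda>x y. dx (dx lam) x y + dy (dy lam) x y + (2*a11 + 2*a22))"
    using leq by (auto simp: fun_eq_iff)
  have main: "\<forall>x y.
           dx (dy lam) x y * (dy (dy (dy (dy lam))) x y - dx (dx (dx (dx lam))) x y)
         + 3 * (dy (dy (dy lam)) x y * dx (dy (dy lam)) x y - dx (dx (dy lam)) x y * dx (dx (dx lam)) x y)
         + 2 * (dy (dy lam) x y * dx (dy (dy (dy lam))) x y - dx (dx lam) x y * dx (dx (dx (dy lam))) x y)
         + 4 * a22 * dx (dy (dy (dy lam))) x y - 4 * a11 * dx (dx (dx (dy lam))) x y
         + 2 * a12 * (dy (dy (dy (dy lam))) x y - dx (dx (dx (dx lam))) x y) = 0"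
  proof (intro allI)
    fix x y
    have L1: "dx (\<lambda>x y. 2*c\<^sub>2*\<Lambda> x y) = dx (\<lambda>x y. dx (dx lam) x y + dy (dy lam) x y + (2*a11 + 2*a22))"
      using LL by simp
    have L2: "dy (\<lambda>x y. 2*c\<^sub>2*\<Lambda> x y) = dy (\<lambda>x y. dx (dx lam) x y + dy (dy lam) x y + (2*a11 + 2*a22))"
      using LL by simp
    have h1: "2*c\<^sub>2*dx \<Lambda> x y = dx (dx (dx lam)) x y + dx (dy (dy lam)) x y"
      using fun_cong[OF fun_cong[OF L1, of x], of y] by (simp add: sm dr comm)
    have h2: "2*c\<^sub>2*dy \<Lambda> x y = dx (dx (dy lam)) x y + dy (dy (dy lam)) x y"
      using fun_cong[OF fun_cong[OF L2, of x], of y] by (simp add: sm dr comm)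
    have h3: "2*c\<^sub>2*dx (dx \<Lambda>) x y = dx (dx (dx (dx lam))) x y + dx (dx (dy (dy lam))) x y"
      using fun_cong[OF fun_cong[OF arg_cong[where f=dx, OF L1], of x], of y] by (simp add: sm dr comm)
    have h4: "2*c\<^sub>2*dy (dy \<Lambda>) x y = dx (dx (dy (dy lam))) x y + dy (dy (dy (dy lam))) x y"
      using fun_cong[OF fun_cong[OF arg_cong[where f=dy, OF L2], of x], of y] by (simp add: sm dr comm)
    have h5: "2*c\<^sub>2*dx (dy \<Lambda>) x y = dx (dx (dx (dy lam))) x y + dx (dy (dy (dy lam))) x y"
      using fun_cong[OF fun_cong[OF arg_cong[where f=dx, OF L2], of x], of y] by (simp add: sm dr comm)
    have h6: "2*c\<^sub>2*\<Lambda> x y = dx (dx lam) x y + dy (dy lam) x y + (2*a11 + 2*a22)"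
      using leq[of x y] by simp
    have C: "-(dy (dy \<Lambda>) x y * (dx (dy lam) x y + 2*a12) + dy \<Lambda> x y * dx (dy (dy lam)) x y)
         = (2 * (dx (dy \<Lambda>) x y * (dy (dy lam) x y + 2*a22) + dy \<Lambda> x y * dx (dy (dy lam)) x y)
           - (dx (dx \<Lambda>) x y * (dx (dy lam) x y + 2*a12) + dx \<Lambda> x y * dx (dx (dy lam)) x y))
           - 2 * (dx \<Lambda> x y * dx (dx (dy lam)) x y + \<Lambda> x y * dx (dx (dx (dy lam))) x y)"
    proof -
      have "dy F1 x y = dx F2 x y" using FF by simp
      hence "-(dy (dy \<Lambda>) x y * B x y + dy \<Lambda> x y * dx (dy (dy lam)) x y)
         = (2 * (dx (dy \<Lambda>) x y * S x y + dy \<Lambda> x y * dx (dy (dy lam)) x y)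
        - (dx (dx \<Lambda>) x y * B x y + dx \<Lambda> x y * dx (dx (dy lam)) x y))
        - 2 * (dx \<Lambda> x y * dx (dx (dy lam)) x y + \<Lambda> x y * dx (dx (dx (dy lam))) x y)"
        using half_eq by (metis dyF1 dxF2)
      thus ?thesis by (simp add: B_def S_def)
    qed
    show "dx (dy lam) x y * (dy (dy (dy (dy lam))) x y - dx (dx (dx (dx lam))) x y)
         + 3 * (dy (dy (dy lam)) x y * dx (dy (dy lam)) x y - dx (dx (dy lam)) x y * dx (dx (dx lam)) x y)
         + 2 * (dy (dy lam) x y * dx (dy (dy (dy lam))) x y - dx (dx lam) x y * dx (dx (dx (dy lam))) x y)
         + 4 * a22 * dx (dy (dy (dy lam))) x y - 4 * a11 * dx (dx (dx (dy lam))) x y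
         + 2 * a12 * (dy (dy (dy (dy lam))) x y - dx (dx (dx (dx lam))) x y) = 0"
      by (rule final_alg[OF h1 h2 h3 h4 h5 h6 C])
  qed
  show ?thesis using main unfolding Let_def a11_def a22_def a12_def X11_def X22_def X12_def .
qed


end
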